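(* Let $m\geq 3$ be an odd integer, let $g:\mathrm{GF}(2^m)\to\mathrm{GF}(2^m)$ be an almost bent function with $g(0)=0$, let $A$ be an additive subgroup of $(\mathrm{GF}(2^m),+)$ of order $2^r$ with $1\le r\le m$, let $$\mathcal{C}_{(g,A)}=\{(\mathrm{Tr}_1^m(ag(x)+bx))_{x\in \mathrm{GF}(2^m)^*}: a\in A,\ b\in \mathrm{GF}(2^m)\},$$ and let $\mathcal{D}=\overline{\mathcal{C}_{(g,A)}^\perp}^\perp$, a binary code of length $2^m$ whose coordinates are indexed by $\mathcal{P}=\{0,1,\dots,2^m-1\}$. Its weight distribution is: $A_0=1$, $A_{2^{m-1}-2^{(m-1)/2}}=2^{m-1}(2^r-1)$, $A_{2^{m-1}}=2^{m+r}+2^m-2$, $A_{2^{m-1}+2^{(m-1)/2}}=2^{m-1}(2^r-1)$, $A_{2^m}=1$, and $A_k=0$ otherwise. For any $k$ with $A_k\ne0$, let $\mathcal{B}$ be the set of supports of the codewords of $\mathcal{D}$ of Hamming weight $k$. If $r=m$, then $(\mathcal{P},\mathcal{B})$ is a $3$-$(2^m,k,\lambda)$ design with $$\lambda=\frac{k(k-1)(k-2)A_k}{2^m(2^m-1)(2^m-2)}.$$ If $r\neq m$, then $(\mathcal{P},\mathcal{B})$ is a $1$-$(2^m,k,\lambda)$ design with $\lambda=\frac{kA_k}{2^m}$.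
   Context: $\mathrm{Tr}_1^m$ is the absolute trace from $\mathrm{GF}(2^m)$ to $\mathrm{GF}(2)$. A function $g:\mathrm{GF}(2^m)\to\mathrm{GF}(2^m)$ is almost bent if $\sum_{x\in\mathrm{GF}(2^m)}(-1)^{\mathrm{Tr}_1^m(ag(x)+bx)}\in\{0,\pm2^{(m+1)/2}\}$ for all $a\neq0$, $b$. For a binary linear code $\mathcal{C}$ of length $n$, $\mathcal{C}^\perp$ is its dual and $\overline{\mathcal{C}}$ is its extended code of length $n+1$, obtained by appending the overall parity coordinate $\sum_i c_i$ to each codeword. The support of a codeword $c=(c_0,\dots,c_{n-1})$ is $\{i: c_i\neq 0\}$. A $t$-$(n,k,\lambda)$ design is a pair $(\mathcal{P},\mathcal{B})$ where $\mathcal{P}$ is a set of $n$ points and $\mathcal{B}$ a set of $k$-subsets of $\mathcal{P}$ (blocks) such that every $t$-subset of $\mathcal{P}$ is contained in exactly $\lambda$ blocks. *)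

theory Defs
  imports Complex_Main
begin

text \<open>Absolute trace from GF(2^m) to GF(2), as an element of the field (it is 0 or 1).\<close>
definition tr :: "nat \<Rightarrow> 'a::field \<Rightarrow> 'a" where
  "tr m x = (\<Sum>i<m. x ^ (2 ^ i))"

definition trbit :: "nat \<Rightarrow> 'a::field \<Rightarrow> nat" where
  "trbit m x = (if tr m x = 1 then 1 else 0)"

definition almost_bent :: "nat \<Rightarrow> ('a::{field,finite} \<Rightarrow> 'a) \<Rightarrow> bool" where
  "almost_bent m g \<longleftrightarrow>
     (\<forall>a b. a \<noteq> 0 \<longrightarrow>
        (\<Sum>x\<in>(UNIV::'a set). (-1::int) ^ trbit m (a * g x + b * x))
          \<in> {0, 2 ^ ((m + 1) div 2), - (2 ^ ((m + 1) div 2))})"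

definition additive_subgroup :: "'a::ab_group_add set \<Rightarrow> bool" where
  "additive_subgroup A \<longleftrightarrow> 0 \<in> A \<and> (\<forall>x\<in>A. \<forall>y\<in>A. x + y \<in> A \<and> x - y \<in> A)"

text \<open>Binary words with coordinates indexed by a finite set I are modelled as
  functions functions from indices to bool that are False outside I (True = bit 1).\<close>

definition words :: "'i set \<Rightarrow> ('i \<Rightarrow> bool) set" where
  "words I = {c. \<forall>i. i \<notin> I \<longrightarrow> \<not> c i}"

definition dual_code :: "'i set \<Rightarrow> ('i \<Rightarrow> bool) set \<Rightarrow> ('i \<Rightarrow> bool) set" where
  "dual_code I C = {d \<in> words I. \<forall>c\<in>C. even (card {i\<in>I. c i \<and> d i})}"

definition extend_code :: "'i set \<Rightarrow> 'i \<Rightarrow> ('i \<Rightarrow> bool) set \<Rightarrow> ('i \<Rightarrow> bool) set" where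
  "extend_code I e C = (\<lambda>c. c(e := odd (card {i\<in>I. c i}))) ` C"

definition supp :: "('i \<Rightarrow> bool) \<Rightarrow> 'i set" where
  "supp c = {i. c i}"

definition hweight :: "('i \<Rightarrow> bool) \<Rightarrow> nat" where
  "hweight c = card (supp c)"

definition code_gA :: "nat \<Rightarrow> ('a::{field,finite} \<Rightarrow> 'a) \<Rightarrow> 'a set \<Rightarrow> ('a \<Rightarrow> bool) set" where
  "code_gA m g A = {(\<lambda>x. x \<noteq> 0 \<and> tr m (a * g x + b * x) = 1) | a b. a \<in> A}"

text \<open>The code D = ext(C^perp)^perp of length 2^m; coordinates indexed by the field,
  the parity coordinate being placed at the field element 0.\<close>
definition code_D :: "nat \<Rightarrow> ('a::{field,finite} \<Rightarrow> 'a) \<Rightarrow> 'a set \<Rightarrow> ('a \<Rightarrow> bool) set" where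
  "code_D m g A = dual_code (UNIV::'a set)
      (extend_code (UNIV - {0}) 0 (dual_code (UNIV - {0}) (code_gA m g A)))"

definition weight_count :: "('i \<Rightarrow> bool) set \<Rightarrow> nat \<Rightarrow> nat" where
  "weight_count C k = card {c\<in>C. hweight c = k}"

definition t_design :: "'p set \<Rightarrow> 'p set set \<Rightarrow> nat \<Rightarrow> nat \<Rightarrow> nat \<Rightarrow> real \<Rightarrow> bool" where
  "t_design P B t v k lam \<longleftrightarrow> finite P \<and> card P = v \<and>
     (\<forall>b\<in>B. b \<subseteq> P \<and> card b = k) \<and>
     (\<forall>T. T \<subseteq> P \<and> card T = t \<longrightarrow> real (card {b\<in>B. T \<subseteq> b}) = lam)"

end

theory Submission
  imports Defs "HOL-Computational_Algebra.Polynomial"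
begin

locale gf =
  fixes m :: nat and g :: "'a::{field,finite} \<Rightarrow> 'a" and A :: "'a set" and r :: nat
  assumes card_field: "card (UNIV::'a set) = 2 ^ m"
    and m_ge: "m \<ge> 3" and m_odd: "odd m"
    and ab: "almost_bent m g" and g0: "g 0 = 0"
    and subgrp: "additive_subgroup A" and cardA: "card A = 2 ^ r"
    and r_ge: "1 \<le> r" and r_le: "r \<le> m"
begin

lemma two_eq_zero: "(1::'a) + 1 = 0"
proof -
  have "(\<Sum>x\<in>(UNIV::'a set). x + 1) = (\<Sum>x\<in>UNIV. x)"
    by (rule sum.reindex_bij_betw) (auto simp: bij_betw_def inj_on_def intro!: image_eqI[where x="_ - 1"])
  hence "of_nat (card (UNIV::'a set)) = (0::'a)"
    by (simp add: sum.distrib)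
  hence "(2::'a) ^ m = 0" using card_field by simp
  hence "(2::'a) = 0" by simp
  thus ?thesis by simp
qed

lemma two_zero [simp]: "(2::'a) = 0"
  using two_eq_zero by simp

lemma add_self [simp]: "(x::'a) + x = 0"
  by (metis distrib_left mult_1_right mult_zero_right two_eq_zero)

lemma neg_eq [simp]: "- (x::'a) = x"
  by (rule add.inverse_unique) simp

lemma minus_eq: "(x::'a) - y = x + y"
  by (simp add: diff_conv_add_uminus)


lemma frob2: "((x::'a) + y) ^ 2 = x ^ 2 + y ^ 2"
proof -
  have "(x + y) ^ 2 = x^2 + y^2 + (x*y + x*y)" by (simp add: power2_eq_square algebra_simps)
  thus ?thesis by (simp only: add_self add_0_right)
qed

lemma frob: "((x::'a) + y) ^ (2 ^ i) = x ^ (2 ^ i) + y ^ (2 ^ i)"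
proof (induction i)
  case 0 then show ?case by simp
next
  case (Suc i)
  have "(x + y) ^ (2 ^ Suc i) = ((x + y) ^ (2 ^ i)) ^ 2" by (simp add: power_mult[symmetric] mult.commute)
  also have "\<dots> = (x ^ (2 ^ i)) ^ 2 + (y ^ (2 ^ i)) ^ 2" using Suc frob2 by simp
  also have "\<dots> = x ^ (2 ^ Suc i) + y ^ (2 ^ Suc i)" by (simp add: power_mult[symmetric] mult.commute)
  finally show ?case .
qed

lemma fermat: "(x::'a) ^ (2 ^ m) = x"
proof (cases "x = 0")
  case True then show ?thesis by simp
next
  case False
  let ?S = "UNIV - {0::'a}"
  have "(\<Prod>y\<in>?S. x * y) = (\<Prod>y\<in>?S. y)"
    by (rule prod.reindex_bij_betw, rule bij_betw_byWitness[where f'="\<lambda>y. y / x"]) (use False in auto)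
  moreover have "(\<Prod>y\<in>?S. x * y) = x ^ card ?S * (\<Prod>y\<in>?S. y)"
    by (simp add: prod.distrib)
  moreover have "(\<Prod>y\<in>?S. y) \<noteq> 0" by simp
  ultimately have "x ^ card ?S = 1" by simp
  moreover have "card ?S = 2 ^ m - 1" using card_field by (simp add: card_Diff_singleton)
  ultimately have "x ^ (2 ^ m - 1) = 1" by simp
  hence "x * x ^ (2 ^ m - 1) = x" by simp
  moreover have "Suc (2 ^ m - 1) = (2::nat) ^ m" by simp
  ultimately show ?thesis by (metis power_Suc)
qed

lemma tr_add: "tr m ((x::'a) + y) = tr m x + tr m y"
  by (simp add: tr_def frob sum.distrib)

lemma pow_sq: "((x::'a) ^ (2 ^ i)) ^ 2 = x ^ (2 ^ Suc i)"
proof -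
  have "(2::nat) ^ Suc i = 2 ^ i * 2" by simp
  hence "x ^ (2 ^ Suc i) = x ^ (2 ^ i * 2)" by (simp only:)
  also have "\<dots> = (x ^ (2 ^ i)) ^ 2" by (rule power_mult)
  finally show ?thesis by simp
qed

lemma tr_sq: "tr m (x::'a) ^ 2 = tr m x"
proof -
  have "tr m x ^ 2 = (\<Sum>i<m. (x ^ (2 ^ i)) ^ 2)"
  proof -
    have "\<And>n. (\<Sum>i<n. x ^ (2 ^ i)) ^ 2 = (\<Sum>i<n. (x ^ (2 ^ i)) ^ 2)"
    proof -
      fix n show "(\<Sum>i<n. x ^ (2 ^ i)) ^ 2 = (\<Sum>i<n. (x ^ (2 ^ i)) ^ 2)"
        by (induction n) (simp_all only: frob2 sum.lessThan_Suc lessThan_0 sum.empty power_0_left, simp)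
    qed
    thus ?thesis by (simp add: tr_def)
  qed
  also have "\<dots> = (\<Sum>i<m. x ^ (2 ^ Suc i))" by (simp only: pow_sq)
  also have "\<dots> = (\<Sum>i<m. x ^ (2 ^ i))"
  proof -
    have e1: "(\<Sum>i<Suc m. x ^ (2 ^ i)) = x ^ (2 ^ 0) + (\<Sum>i<m. x ^ (2 ^ Suc i))"
      by (rule sum.lessThan_Suc_shift)
    have e2: "(\<Sum>i<Suc m. x ^ (2 ^ i)) = (\<Sum>i<m. x ^ (2 ^ i)) + x ^ (2 ^ m)"
      by (rule sum.lessThan_Suc)
    have h: "x ^ (2 ^ 0) = x ^ (2 ^ m)" by (simp only: fermat power_0 power_one_right)
    from e1 e2 h show ?thesis by (metis add.commute add_left_cancel)
  qed
  finally show ?thesis by (simp only: tr_def)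
qed

lemma tr_01: "tr m (x::'a) = 0 \<or> tr m x = 1"
proof -
  have "tr m x * (tr m x - 1) = 0"
    by (simp only: right_diff_distrib mult_1_right power2_eq_square[symmetric] tr_sq diff_self)
  thus ?thesis by auto
qed

lemma tr_0 [simp]: "tr m (0::'a) = 0"
  using m_ge by (simp add: tr_def zero_power)

lemma tr_exists: "\<exists>y::'a. tr m y = 1"
proof (rule ccontr)
  assume "\<not> ?thesis"
  hence z: "\<forall>y::'a. tr m y = 0" using tr_01 by blast
  define p :: "'a poly" where "p = (\<Sum>i<m. monom 1 (2 ^ i))"
  have pv: "poly p y = tr m y" for y by (simp add: p_def poly_sum poly_monom tr_def)
  have "m \<ge> 1" using m_ge by simp
  have "coeff p (2 ^ (m - 1)) = (\<Sum>i<m. if 2 ^ i = (2::nat) ^ (m - 1) then 1 else 0)"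
    by (simp add: p_def coeff_sum)
  also have "\<dots> = (\<Sum>i\<in>{m - 1}. 1)"
    by (rule sum.mono_neutral_cong_right) (use \<open>m \<ge> 1\<close> in auto)
  finally have "coeff p (2 ^ (m - 1)) = 1" by simp
  hence pnz: "p \<noteq> 0" by auto
  have "degree p \<le> 2 ^ (m - 1)" unfolding p_def
    by (rule degree_sum_le) (auto simp: degree_monom_eq intro: power_increasing)
  moreover have "card {x. poly p x = 0} \<le> degree p" by (rule card_poly_roots_bound[OF pnz])
  moreover have "{x. poly p x = 0} = UNIV" using z pv by auto
  ultimately have "(2::nat) ^ m \<le> 2 ^ (m - 1)" using card_field by (metis order.trans)
  moreover have "(2::nat) ^ (m - 1) < 2 ^ m" using \<open>m \<ge> 1\<close> by (simp add: power_strict_increasing)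
  ultimately show False by linarith
qed


lemma add_self2 [simp]: "(x::'a) + (x + y) = y"
  by (simp add: add.assoc[symmetric])

lemma add_eq0_iff: "(x::'a) + y = 0 \<longleftrightarrow> x = y"
  by (metis add.inverse_unique neg_eq add_self)

lemma sum_shift: "(\<Sum>x\<in>UNIV. f (x + c)) = (\<Sum>x\<in>(UNIV::'a set). (f x :: 'b::comm_monoid_add))"
proof -
  have "bij_betw (\<lambda>x. x + c) (UNIV::'a set) UNIV"
    by (rule bij_betw_byWitness[where f'="\<lambda>x. x + c"]) (auto simp: add.assoc)
  thus ?thesis by (rule sum.reindex_bij_betw)
qed

lemma sum_scale: "(c::'a) \<noteq> 0 \<Longrightarrow> (\<Sum>x\<in>UNIV. f (c * x)) = (\<Sum>x\<in>(UNIV::'a set). (f x :: 'b::comm_monoid_add))"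
proof -
  assume c: "c \<noteq> 0"
  have "bij_betw (\<lambda>x. c * x) (UNIV::'a set) UNIV"
    by (rule bij_betw_byWitness[where f'="\<lambda>x. x / c"]) (use c in auto)
  thus ?thesis by (rule sum.reindex_bij_betw)
qed

definition chi :: "'a \<Rightarrow> int" where "chi x = (-1) ^ trbit m x"

lemma chi_eq: "chi x = (if tr m x = 1 then -1 else 1)"
  by (simp add: chi_def trbit_def)

lemma chi_0 [simp]: "chi 0 = 1"
  by (simp add: chi_eq)

lemma chi_add: "chi (x + y) = chi x * chi y"
  using tr_01[of x] tr_01[of y] tr_add[of x y] by (auto simp: chi_eq)

lemma chi_sq [simp]: "chi x * chi x = 1"
  by (simp add: chi_eq)

lemma sum_chi: "(\<Sum>x\<in>UNIV. chi x) = 0"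
proof -
  obtain y0 :: 'a where y0: "tr m y0 = 1" using tr_exists by blast
  have "(\<Sum>x\<in>UNIV. chi (x + y0)) = (\<Sum>x\<in>UNIV. chi x)" by (rule sum_shift)
  moreover have "(\<Sum>x\<in>UNIV. chi (x + y0)) = - (\<Sum>x\<in>UNIV. chi x)"
  proof -
    have cy: "chi y0 = -1" by (simp add: chi_eq y0)
    show ?thesis by (simp add: chi_add cy sum_negf)
  qed
  ultimately show ?thesis by simp
qed

lemma card_int: "int (card (UNIV::'a set)) = 2 ^ m"
  using card_field by simp

lemma orth: "(\<Sum>b\<in>UNIV. chi (b * z)) = (if z = 0 then 2 ^ m else 0)"
proof (cases "z = 0")
  case True then show ?thesis using card_int by simp
next
  case False
  have "(\<Sum>b\<in>UNIV. chi (b * z)) = (\<Sum>b\<in>UNIV. chi (z * b))" by (simp add: mult.commute)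
  also have "\<dots> = 0" using sum_scale[OF False, of chi] sum_chi by simp
  finally show ?thesis using False by simp
qed

definition W :: "'a \<Rightarrow> 'a \<Rightarrow> int" where
  "W a b = (\<Sum>x\<in>UNIV. chi (a * g x + b * x))"

definition LL :: int where "LL = 2 ^ ((m + 1) div 2)"

lemma W_ab: "a \<noteq> 0 \<Longrightarrow> W a b = 0 \<or> W a b = LL \<or> W a b = - LL"
  using ab unfolding almost_bent_def W_def chi_def LL_def by auto

lemma LL_sq: "LL * LL = 2 * 2 ^ m"
proof -
  have "(m + 1) div 2 + (m + 1) div 2 = Suc m" using m_odd by presburger
  hence "LL * LL = 2 ^ Suc m" unfolding LL_def by (metis power_add)
  thus ?thesis by simp
qed

lemma W_0: "W 0 b = (if b = 0 then 2 ^ m else 0)"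
proof -
  have "W 0 b = (\<Sum>x\<in>UNIV. chi (x * b))" unfolding W_def by (simp add: mult.commute)
  thus ?thesis using orth[of b] by simp
qed

lemma W_inv: "(\<Sum>b\<in>UNIV. W a b * chi (b * u)) = 2 ^ m * chi (a * g u)"
proof -
  have "(\<Sum>b\<in>UNIV. W a b * chi (b * u)) = (\<Sum>b\<in>UNIV. \<Sum>x\<in>UNIV. chi (a * g x) * chi (b * (x + u)))"
    unfolding W_def sum_distrib_right
    by (intro sum.cong refl) (simp add: chi_add[symmetric] distrib_left add.assoc)
  also have "\<dots> = (\<Sum>x\<in>UNIV. chi (a * g x) * (\<Sum>b\<in>UNIV. chi (b * (x + u))))"
    by (subst sum.swap) (simp add: sum_distrib_left)
  also have "\<dots> = (\<Sum>x\<in>UNIV. if x = u then chi (a * g x) * 2 ^ m else 0)"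
    by (intro sum.cong refl) (simp add: orth add_eq0_iff)
  also have "\<dots> = 2 ^ m * chi (a * g u)" by simp
  finally show ?thesis .
qed

lemma W_sum: "(\<Sum>b\<in>UNIV. W a b) = 2 ^ m"
  using W_inv[of a 0] g0 by simp

definition D :: "'a \<Rightarrow> 'a \<Rightarrow> 'a" where "D U x = g x + g (x + U)"

definition R :: "'a \<Rightarrow> 'a \<Rightarrow> int" where
  "R a U = (\<Sum>x\<in>UNIV. chi (a * D U x))"

lemma Wsq: "W a b ^ 2 = (\<Sum>U\<in>UNIV. chi (b * U) * R a U)"
proof -
  have "W a b ^ 2 = (\<Sum>x\<in>UNIV. \<Sum>y\<in>UNIV. chi (a * g x + b * x) * chi (a * g y + b * y))"
    by (simp add: power2_eq_square W_def sum_product)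
  also have "\<dots> = (\<Sum>x\<in>UNIV. \<Sum>U\<in>UNIV. chi (a * g x + b * x) * chi (a * g (U + x) + b * (U + x)))"
  proof (rule sum.cong[OF refl])
    fix x :: 'a
    show "(\<Sum>y\<in>UNIV. chi (a * g x + b * x) * chi (a * g y + b * y)) =
      (\<Sum>U\<in>UNIV. chi (a * g x + b * x) * chi (a * g (U + x) + b * (U + x)))"
      using sum_shift[of "\<lambda>y. chi (a * g x + b * x) * chi (a * g y + b * y)" x] by simp
  qed
  also have "\<dots> = (\<Sum>x\<in>UNIV. \<Sum>U\<in>UNIV. chi (b * U) * chi (a * D U x))"
  proof (intro sum.cong refl)
    fix x U
    have "a * g x + b * x + (a * g (U + x) + b * (U + x)) = b * U + a * D U x"
      by (simp add: D_def distrib_left add.commute add.left_commute)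
    thus "chi (a * g x + b * x) * chi (a * g (U + x) + b * (U + x)) = chi (b * U) * chi (a * D U x)"
      by (metis chi_add)
  qed
  also have "\<dots> = (\<Sum>U\<in>UNIV. chi (b * U) * R a U)"
    by (subst sum.swap) (simp add: R_def sum_distrib_left)
  finally show ?thesis .
qed


lemma sum_if_eq: "(\<Sum>x\<in>UNIV. if x = u then f x else (0::int)) = f (u::'a)"
  by simp

lemma Wsq_tw: "(\<Sum>b\<in>UNIV. W a b ^ 2 * chi (b * V)) = 2 ^ m * R a V"
proof -
  have "(\<Sum>b\<in>UNIV. W a b ^ 2 * chi (b * V)) = (\<Sum>b\<in>UNIV. \<Sum>U\<in>UNIV. R a U * chi (b * (U + V)))"
    unfolding Wsq sum_distrib_right
    by (intro sum.cong refl) (simp add: chi_add distrib_left mult_ac)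
  also have "\<dots> = (\<Sum>U\<in>UNIV. R a U * (\<Sum>b\<in>UNIV. chi (b * (U + V))))"
    by (subst sum.swap) (simp add: sum_distrib_left)
  also have "\<dots> = (\<Sum>U\<in>UNIV. if U = V then 2 ^ m * R a U else 0)"
    by (intro sum.cong refl) (simp add: orth add_eq0_iff)
  also have "\<dots> = 2 ^ m * R a V" by simp
  finally show ?thesis .
qed

lemma R_0: "R a 0 = 2 ^ m"
  using card_int by (simp add: R_def D_def)

lemma W_sq_sum: "(\<Sum>b\<in>UNIV. W a b ^ 2) = 2 ^ m * 2 ^ m"
  using Wsq_tw[of a 0] R_0 by simp

lemma W4: "(\<Sum>b\<in>UNIV. W a b ^ 4) = 2 ^ m * (\<Sum>U\<in>UNIV. R a U ^ 2)"
proof -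
  have "(\<Sum>b\<in>UNIV. W a b ^ 4) = (\<Sum>b\<in>UNIV. \<Sum>U\<in>UNIV. R a U * (W a b ^ 2 * chi (b * U)))"
  proof (rule sum.cong[OF refl])
    fix b :: 'a
    have "W a b ^ 4 = W a b ^ 2 * W a b ^ 2" by simp
    also have "\<dots> = W a b ^ 2 * (\<Sum>U\<in>UNIV. chi (b * U) * R a U)" by (subst (2) Wsq) simp
    also have "\<dots> = (\<Sum>U\<in>UNIV. R a U * (W a b ^ 2 * chi (b * U)))"
      by (simp add: sum_distrib_left mult_ac)
    finally show "W a b ^ 4 = (\<Sum>U\<in>UNIV. R a U * (W a b ^ 2 * chi (b * U)))" .
  qed
  also have "\<dots> = (\<Sum>U\<in>UNIV. R a U * (\<Sum>b\<in>UNIV. W a b ^ 2 * chi (b * U)))"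
    by (subst sum.swap) (simp add: sum_distrib_left)
  also have "\<dots> = (\<Sum>U\<in>UNIV. R a U * (2 ^ m * R a U))"
    by (simp add: Wsq_tw)
  also have "\<dots> = 2 ^ m * (\<Sum>U\<in>UNIV. R a U ^ 2)"
    by (simp add: sum_distrib_left power2_eq_square mult_ac)
  finally show ?thesis .
qed

lemma R_sq: "(\<Sum>a\<in>UNIV. R a U ^ 2) = 2 ^ m * (\<Sum>x\<in>UNIV. \<Sum>y\<in>UNIV. of_bool (D U x = D U y))"
proof -
  have "(\<Sum>a\<in>UNIV. R a U ^ 2) = (\<Sum>a\<in>UNIV. \<Sum>x\<in>UNIV. \<Sum>y\<in>UNIV. chi (a * (D U x + D U y)))"
    unfolding R_def power2_eq_square sum_product
    by (intro sum.cong refl) (simp add: chi_add distrib_left)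
  also have "\<dots> = (\<Sum>x\<in>UNIV. \<Sum>a\<in>UNIV. \<Sum>y\<in>UNIV. chi (a * (D U x + D U y)))"
    by (rule sum.swap)
  also have "\<dots> = (\<Sum>x\<in>UNIV. \<Sum>y\<in>UNIV. \<Sum>a\<in>UNIV. chi (a * (D U x + D U y)))"
    by (rule sum.cong[OF refl], rule sum.swap)
  also have "\<dots> = (\<Sum>x\<in>UNIV. \<Sum>y\<in>UNIV. 2 ^ m * of_bool (D U x = D U y))"
    by (intro sum.cong refl) (simp add: orth add_eq0_iff)
  also have "\<dots> = 2 ^ m * (\<Sum>x\<in>UNIV. \<Sum>y\<in>UNIV. of_bool (D U x = D U y))"
    by (simp only: sum_distrib_left)
  finally show ?thesis .
qed

lemma W4_ab: "a \<noteq> 0 \<Longrightarrow> (\<Sum>b\<in>UNIV. W a b ^ 4) = 2 * 2 ^ m * (2 ^ m * 2 ^ m)"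
proof -
  assume a: "a \<noteq> 0"
  have "W a b ^ 4 = (LL * LL) * W a b ^ 2" for b
    using W_ab[OF a, of b] by (auto simp: power2_eq_square power4_eq_xxxx)
  hence "(\<Sum>b\<in>UNIV. W a b ^ 4) = (LL * LL) * (\<Sum>b\<in>UNIV. W a b ^ 2)"
    by (simp add: sum_distrib_left)
  thus ?thesis by (simp add: LL_sq W_sq_sum)
qed

lemma W4_0: "(\<Sum>b\<in>UNIV. W 0 b ^ 4) = (2 ^ m) ^ 4"
proof -
  have "(\<Sum>b\<in>UNIV. W 0 b ^ 4) = (\<Sum>b\<in>UNIV. if b = (0::'a) then (2 ^ m) ^ 4 else 0)"
    by (intro sum.cong refl) (auto simp: W_0)
  thus ?thesis by simp
qed


lemma sum_split0: "(\<Sum>a\<in>UNIV. f a) = f 0 + (\<Sum>a\<in>UNIV - {0::'a}. (f a :: int))"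
  by (simp add: sum.remove[of UNIV 0])

lemma card_nz: "int (card (UNIV - {0::'a})) = 2 ^ m - 1"
  using card_field by (simp add: card_Diff_singleton of_nat_diff)

definition SS :: int where "SS = (\<Sum>U\<in>UNIV. \<Sum>x\<in>UNIV. \<Sum>y\<in>(UNIV::'a set). of_bool (D U x = D U y))"

lemma SS_val: "SS = 3 * 2 ^ m * 2 ^ m - 2 * 2 ^ m"
proof -
  define n :: int where "n = 2 ^ m"
  have npos: "n > 0" by (simp add: n_def)
  have "(\<Sum>a\<in>UNIV. \<Sum>b\<in>UNIV. W a b ^ 4) = n * n * SS"
  proof -
    have "(\<Sum>a\<in>UNIV. \<Sum>b\<in>UNIV. W a b ^ 4) = (\<Sum>a\<in>UNIV. n * (\<Sum>U\<in>UNIV. R a U ^ 2))"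
      by (simp add: W4 n_def)
    also have "\<dots> = n * (\<Sum>U\<in>UNIV. \<Sum>a\<in>UNIV. R a U ^ 2)"
      using sum.swap[of "\<lambda>a U. R a U ^ 2" UNIV UNIV] by (simp add: sum_distrib_left[symmetric])
    also have "\<dots> = n * (\<Sum>U\<in>UNIV. n * (\<Sum>x\<in>UNIV. \<Sum>y\<in>UNIV. of_bool (D U x = D U y)))"
      by (simp only: R_sq n_def)
    also have "\<dots> = n * n * SS"
      by (simp only: SS_def sum_distrib_left[symmetric] mult.assoc)
    finally show ?thesis .
  qed
  moreover have "(\<Sum>a\<in>UNIV. \<Sum>b\<in>UNIV. W a b ^ 4) = n ^ 4 + (n - 1) * (2 * n * (n * n))"
  proof -
    have "(\<Sum>a\<in>UNIV - {0}. \<Sum>b\<in>UNIV. W a b ^ 4) = (\<Sum>a\<in>UNIV - {0::'a}. 2 * n * (n * n))"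
      by (intro sum.cong refl) (simp add: W4_ab n_def)
    also have "\<dots> = (n - 1) * (2 * n * (n * n))" using card_nz by (simp add: n_def)
    finally show ?thesis by (subst sum_split0) (simp add: W4_0 n_def)
  qed
  ultimately have "n * n * SS = n * n * (3 * n * n - 2 * n)"
    by (simp add: algebra_simps power4_eq_xxxx)
  hence "SS = 3 * n * n - 2 * n" using npos by simp
  thus ?thesis by (simp add: n_def)
qed

lemma NT: "D U x = D U y \<Longrightarrow> U = 0 \<or> y = x \<or> y = x + U"
proof -
  define n :: int where "n = 2 ^ m"
  define T :: "'a \<Rightarrow> 'a \<Rightarrow> 'a \<Rightarrow> int" where
    "T U x y = of_bool (U = 0) + of_bool (y = x) + of_bool (y = x + U) - 2 * of_bool (U = 0 \<and> y = x)" for U x y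
  have Teq: "T U x y = of_bool (U = 0 \<or> y = x \<or> y = x + U)" for U x y
    by (auto simp: T_def)
  have Tsum: "(\<Sum>U\<in>UNIV. \<Sum>x\<in>UNIV. \<Sum>y\<in>UNIV. T U x y) = 3 * n * n - 2 * n"
  proof -
    have c: "int (card (UNIV::'a set)) = n" by (simp add: card_int n_def)
    have "(\<Sum>U\<in>UNIV. \<Sum>x\<in>UNIV. \<Sum>y\<in>UNIV. T U x y) =
      (\<Sum>U\<in>UNIV. \<Sum>x\<in>(UNIV::'a set). of_bool (U = (0::'a)) * n + 1 + 1 - 2 * of_bool (U = 0))"
      by (intro sum.cong refl) (simp add: T_def sum.distrib sum_subtractf c flip: sum_distrib_left)
    also have "\<dots> = 3 * n * n - 2 * n"
      by (simp add: sum.distrib sum_subtractf c flip: sum_distrib_left) (simp add: algebra_simps)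
    finally show ?thesis .
  qed
  have le: "T U x y \<le> of_bool (D U x = D U y)" for U x y
    by (auto simp: Teq D_def add.commute add.left_commute)
  have "(\<Sum>U\<in>UNIV. \<Sum>x\<in>UNIV. \<Sum>y\<in>UNIV. of_bool (D U x = D U y) - T U x y) = 0"
    using SS_val Tsum unfolding SS_def n_def by (simp add: sum_subtractf)
  hence "\<forall>U\<in>UNIV. (\<Sum>x\<in>UNIV. \<Sum>y\<in>UNIV. of_bool (D U x = D U y) - T U x y) = 0"
    by (subst (asm) sum_nonneg_eq_0_iff) (auto intro!: sum_nonneg simp: le)
  hence "\<forall>U\<in>UNIV. \<forall>x\<in>UNIV. (\<Sum>y\<in>UNIV. of_bool (D U x = D U y) - T U x y) = 0"
    by (subst (asm) sum_nonneg_eq_0_iff) (auto intro!: sum_nonneg simp: le)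
  hence "\<forall>U\<in>UNIV. \<forall>x\<in>UNIV. \<forall>y\<in>UNIV. of_bool (D U x = D U y) - T U x y = 0"
    by (subst (asm) sum_nonneg_eq_0_iff) (auto simp: le)
  hence z: "of_bool (D U x = D U y) - T U x y = 0" by blast
  assume "D U x = D U y"
  with z have "T U x y = 1" by simp
  thus ?thesis
  proof (rule contrapos_pp)
    assume "\<not> (U = 0 \<or> y = x \<or> y = x + U)"
    hence "T U x y = 0" unfolding Teq by (simp only: of_bool_eq(1))
    thus "T U x y \<noteq> 1" by simp
  qed
qed

lemma apn2: "u \<noteq> v \<Longrightarrow> g x + g (x + (u + v)) = g u + g v \<Longrightarrow> x = u \<or> x = v"
proof -
  assume uv: "u \<noteq> v" and e: "g x + g (x + (u + v)) = g u + g v"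
  have "D (u + v) x = D (u + v) u" using e by (simp add: D_def)
  from NT[OF this] uv show ?thesis by (auto simp: add_eq0_iff add.assoc[symmetric])
qed

lemma apn3: "u \<noteq> v \<Longrightarrow> u \<noteq> w \<Longrightarrow> v \<noteq> w \<Longrightarrow> g (u + v + w) \<noteq> g u + g v + g w"
proof
  assume uv: "u \<noteq> v" "u \<noteq> w" "v \<noteq> w" and e: "g (u + v + w) = g u + g v + g w"
  have "D (u + v) w = D (u + v) u"
    unfolding D_def using e by (simp add: add.commute add.left_commute)
  from NT[OF this] uv show False by (auto simp: add_eq0_iff add.commute add.left_commute)
qed

end

definition ipw :: "'i set \<Rightarrow> ('i \<Rightarrow> bool) \<Rightarrow> ('i \<Rightarrow> bool) \<Rightarrow> nat" where
  "ipw I d e = card {i\<in>I. d i \<and> e i}"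

definition xorw :: "('i \<Rightarrow> bool) \<Rightarrow> ('i \<Rightarrow> bool) \<Rightarrow> ('i \<Rightarrow> bool)" where
  "xorw c c' = (\<lambda>i. c i \<noteq> c' i)"

definition subg :: "'i set \<Rightarrow> ('i \<Rightarrow> bool) set \<Rightarrow> bool" where
  "subg I S \<longleftrightarrow> S \<subseteq> words I \<and> (\<lambda>_. False) \<in> S \<and> (\<forall>e\<in>S. \<forall>e'\<in>S. xorw e e' \<in> S)"

lemma ipw_sym: "ipw I d e = ipw I e d"
  unfolding ipw_def by (simp add: conj_commute)

lemma ipw_xor: assumes "finite I"
  shows "even (ipw I d (xorw e e')) \<longleftrightarrow> (even (ipw I d e) \<longleftrightarrow> even (ipw I d e'))"
proof -
  define X1 where "X1 = {i\<in>I. d i \<and> e i \<and> \<not> e' i}"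
  define X2 where "X2 = {i\<in>I. d i \<and> \<not> e i \<and> e' i}"
  define X3 where "X3 = {i\<in>I. d i \<and> e i \<and> e' i}"
  have f: "finite X1" "finite X2" "finite X3" using assms by (auto simp: X1_def X2_def X3_def)
  have a: "ipw I d e = card X1 + card X3"
  proof -
    have "{i\<in>I. d i \<and> e i} = X1 \<union> X3" by (auto simp: X1_def X3_def)
    moreover have "X1 \<inter> X3 = {}" by (auto simp: X1_def X3_def)
    ultimately show ?thesis using f by (simp add: ipw_def card_Un_disjoint)
  qed
  have b: "ipw I d e' = card X2 + card X3"
  proof -
    have "{i\<in>I. d i \<and> e' i} = X2 \<union> X3" by (auto simp: X2_def X3_def)
    moreover have "X2 \<inter> X3 = {}" by (auto simp: X2_def X3_def)
    ultimately show ?thesis using f by (simp add: ipw_def card_Un_disjoint)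
  qed
  have c: "ipw I d (xorw e e') = card X1 + card X2"
  proof -
    have "{i\<in>I. d i \<and> xorw e e' i} = X1 \<union> X2" by (auto simp: X1_def X2_def xorw_def)
    moreover have "X1 \<inter> X2 = {}" by (auto simp: X1_def X2_def)
    ultimately show ?thesis using f by (simp add: ipw_def card_Un_disjoint)
  qed
  show ?thesis unfolding a b c by auto
qed

lemma sgn_xor: assumes "finite I"
  shows "(-1::int) ^ ipw I d (xorw e e') = (-1) ^ ipw I d e * (-1) ^ ipw I d e'"
  using ipw_xor[OF assms, of d e e'] by (auto simp: minus_one_power_iff)

lemma words_finite: assumes "finite I" shows "finite (words I)"
proof -
  have "words I \<subseteq> (\<lambda>T i. i \<in> T) ` Pow I"
  proof
    fix c assume c: "c \<in> words I"
    have "c = (\<lambda>i. i \<in> {i\<in>I. c i})" using c by (auto simp: words_def)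
    thus "c \<in> (\<lambda>T i. i \<in> T) ` Pow I" by blast
  qed
  thus ?thesis using assms by (rule finite_subset[OF _ finite_imageI[OF finite_Pow_iff[THEN iffD2]]])
qed

lemma xorw_xorw [simp]: "xorw (xorw a b) b = a"
proof (rule ext)
  fix x show "xorw (xorw a b) b x = a x" by (cases "a x"; cases "b x") (simp_all add: xorw_def)
qed

lemma xorw_words: "d \<in> words I \<Longrightarrow> e \<in> words I \<Longrightarrow> xorw d e \<in> words I"
  by (simp add: xorw_def words_def)

lemma sum_Y: assumes I: "finite I" and e: "e \<in> words I"
  shows "(\<Sum>d\<in>words I. (-1::int) ^ ipw I d e) = (if e = (\<lambda>_. False) then int (card (words I)) else 0)"
proof (cases "e = (\<lambda>_. False)")
  case True then show ?thesis by (simp add: ipw_def)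
next
  case False
  then obtain i0 where ei0: "e i0" by auto
  with e have i0: "i0 \<in> I" by (auto simp: words_def)
  define \<delta> where "\<delta> = (\<lambda>i. i = i0)"
  define \<phi> where "\<phi> d = xorw d \<delta>" for d
  have bij: "bij_betw \<phi> (words I) (words I)"
  proof (rule bij_betw_byWitness[where f'=\<phi>])
    have dw: "\<delta> \<in> words I" using i0 unfolding \<delta>_def words_def by blast
    show "\<forall>a\<in>words I. \<phi> (\<phi> a) = a" "\<forall>a\<in>words I. \<phi> (\<phi> a) = a" by (simp_all add: \<phi>_def)
    show "\<phi> ` words I \<subseteq> words I" "\<phi> ` words I \<subseteq> words I" using dw by (auto simp: \<phi>_def xorw_words)
  qed
  have one: "ipw I \<delta> e = 1"
  proof -
    have "{i\<in>I. \<delta> i \<and> e i} = {i0}" using i0 ei0 by (auto simp: \<delta>_def)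
    thus ?thesis by (simp add: ipw_def)
  qed
  have flip: "(-1::int) ^ ipw I (\<phi> d) e = - ((-1) ^ ipw I d e)" for d
    using sgn_xor[OF I, of e d \<delta>] one by (simp add: ipw_sym \<phi>_def)
  have "(\<Sum>d\<in>words I. (-1::int) ^ ipw I (\<phi> d) e) = (\<Sum>d\<in>words I. (-1::int) ^ ipw I d e)"
    by (rule sum.reindex_bij_betw[OF bij])
  hence "(\<Sum>d\<in>words I. (-1::int) ^ ipw I d e) = 0" by (simp add: flip sum_negf)
  thus ?thesis using False by simp
qed

lemma sum_X: assumes I: "finite I" and S: "subg I S" and d: "d \<in> words I"
  shows "(\<Sum>e\<in>S. (-1::int) ^ ipw I d e) = (if d \<in> dual_code I S then int (card S) else 0)"
proof (cases "d \<in> dual_code I S")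
  case True
  hence "\<forall>e\<in>S. even (ipw I d e)" by (auto simp: dual_code_def ipw_def conj_commute)
  then show ?thesis using True by simp
next
  case False
  then obtain e0 where e0: "e0 \<in> S" "odd (ipw I d e0)" using d by (auto simp: dual_code_def ipw_def conj_commute)
  define \<phi> where "\<phi> e = xorw e e0" for e
  have bij: "bij_betw \<phi> S S"
  proof (rule bij_betw_byWitness[where f'=\<phi>])
    show "\<forall>a\<in>S. \<phi> (\<phi> a) = a" "\<forall>a\<in>S. \<phi> (\<phi> a) = a" by (simp_all add: \<phi>_def)
    show "\<phi> ` S \<subseteq> S" "\<phi> ` S \<subseteq> S" using S e0 by (auto simp: \<phi>_def subg_def)
  qed
  have flip: "(-1::int) ^ ipw I d (\<phi> e) = - ((-1) ^ ipw I d e)" for e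
    using sgn_xor[OF I, of d e e0] e0 by (simp add: \<phi>_def)
  have "(\<Sum>e\<in>S. (-1::int) ^ ipw I d (\<phi> e)) = (\<Sum>e\<in>S. (-1::int) ^ ipw I d e)"
    by (rule sum.reindex_bij_betw[OF bij])
  hence "(\<Sum>e\<in>S. (-1::int) ^ ipw I d e) = 0" by (simp add: flip sum_negf)
  thus ?thesis using False by simp
qed

lemma dual_sub: "dual_code I S \<subseteq> words I"
  by (auto simp: dual_code_def)

lemma card_prod: assumes I: "finite I" and S: "subg I S"
  shows "card S * card (dual_code I S) = card (words I)"
proof -
  have fw: "finite (words I)" by (rule words_finite[OF I])
  have SW: "S \<subseteq> words I" and S0: "(\<lambda>_. False) \<in> S" using S by (auto simp: subg_def)
  have fS: "finite S" using finite_subset[OF SW fw] .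
  have "(\<Sum>d\<in>words I. \<Sum>e\<in>S. (-1::int) ^ ipw I d e) = (\<Sum>e\<in>S. \<Sum>d\<in>words I. (-1::int) ^ ipw I d e)"
    by (rule sum.swap)
  also have "\<dots> = (\<Sum>e\<in>S. if e = (\<lambda>_. False) then int (card (words I)) else 0)"
    by (intro sum.cong refl) (use SW in \<open>auto simp: sum_Y[OF I]\<close>)
  also have "\<dots> = int (card (words I))" using S0 fS by (simp add: sum.delta')
  finally have 1: "(\<Sum>d\<in>words I. \<Sum>e\<in>S. (-1::int) ^ ipw I d e) = int (card (words I))" .
  have "(\<Sum>d\<in>words I. \<Sum>e\<in>S. (-1::int) ^ ipw I d e) = (\<Sum>d\<in>words I. if d \<in> dual_code I S then int (card S) else 0)"
    by (intro sum.cong refl) (simp add: sum_X[OF I S])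
  also have "\<dots> = (\<Sum>d\<in>dual_code I S. int (card S))"
  proof -
    have "{d \<in> words I. d \<in> dual_code I S} = dual_code I S" using dual_sub[of I S] by blast
    thus ?thesis using sum.inter_filter[OF fw, of "\<lambda>_. int (card S)" "\<lambda>d. d \<in> dual_code I S"] by simp
  qed
  also have "\<dots> = int (card (dual_code I S)) * int (card S)" by simp
  finally have "int (card (dual_code I S)) * int (card S) = int (card (words I))" using 1 by simp
  thus ?thesis by (metis mult.commute of_nat_eq_iff of_nat_mult)
qed

lemma subg_dual: assumes I: "finite I" shows "subg I (dual_code I S)"
  unfolding subg_def
proof (intro conjI ballI)
  show "dual_code I S \<subseteq> words I" by (rule dual_sub)
  show "(\<lambda>_. False) \<in> dual_code I S" unfolding dual_code_def words_def by simp
  fix e e' assume e: "e \<in> dual_code I S" and e': "e' \<in> dual_code I S"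
  show "xorw e e' \<in> dual_code I S"
    unfolding dual_code_def
  proof (intro CollectI conjI ballI)
    show "xorw e e' \<in> words I" using e e' dual_sub[of I S] by (blast intro: xorw_words)
    fix c assume c: "c \<in> S"
    have "even (ipw I c e)" "even (ipw I c e')" using c e e' unfolding dual_code_def ipw_def by blast+
    hence "even (ipw I c (xorw e e'))" using ipw_xor[OF I] by blast
    thus "even (card {i\<in>I. c i \<and> xorw e e' i})" by (simp add: ipw_def)
  qed
qed

lemma double_dual: assumes I: "finite I" and S: "subg I S"
  shows "dual_code I (dual_code I S) = S"
proof -
  have fw: "finite (words I)" by (rule words_finite[OF I])
  have SW: "S \<subseteq> words I" using S by (auto simp: subg_def)
  have sub: "S \<subseteq> dual_code I (dual_code I S)"
  proof
    fix e assume e: "e \<in> S"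
    show "e \<in> dual_code I (dual_code I S)" unfolding dual_code_def[of I "dual_code I S"]
    proof (intro CollectI conjI ballI)
      show "e \<in> words I" using SW e by blast
      fix c assume "c \<in> dual_code I S"
      hence "even (ipw I e c)" using e unfolding dual_code_def ipw_def by blast
      thus "even (card {i\<in>I. c i \<and> e i})" using ipw_sym[of I e c] by (simp add: ipw_def)
    qed
  qed
  have "(\<lambda>_. False) \<in> words I" by (simp add: words_def)
  hence pos: "card (words I) > 0" using fw card_gt_0_iff by blast
  have 1: "card S * card (dual_code I S) = card (words I)" by (rule card_prod[OF I S])
  have 2: "card (dual_code I S) * card (dual_code I (dual_code I S)) = card (words I)"
    by (rule card_prod[OF I subg_dual[OF I]])
  have dpos: "card (dual_code I S) \<noteq> 0"
  proof
    assume "card (dual_code I S) = 0"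
    with 1 pos show False by simp
  qed
  have "card (dual_code I S) * card S = card (dual_code I S) * card (dual_code I (dual_code I S))"
    using 1 2 by (simp add: mult.commute)
  hence eq: "card S = card (dual_code I (dual_code I S))" using dpos by simp
  have fin: "finite (dual_code I (dual_code I S))" using finite_subset[OF dual_sub fw] .
  show ?thesis by (rule card_subset_eq[OF fin sub eq, symmetric])
qed

context gf begin

lemma A0: "0 \<in> A" and A_add: "x \<in> A \<Longrightarrow> y \<in> A \<Longrightarrow> x + y \<in> A"
  using subgrp by (auto simp: additive_subgroup_def)

lemma tr_xor: "(tr m (u + v) = 1) \<longleftrightarrow> ((tr m u = 1) \<noteq> (tr m (v::'a) = 1))"
  using tr_01[of u] tr_01[of v] by (auto simp: tr_add)

definition cw :: "'a \<Rightarrow> 'a \<Rightarrow> bool \<Rightarrow> 'a \<Rightarrow> bool" where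
  "cw a b e = (\<lambda>x. (tr m (a * g x + b * x) = 1) \<noteq> e)"

definition PP :: "('a \<times> 'a \<times> bool) set" where "PP = A \<times> UNIV \<times> UNIV"

definition EE :: "('a \<Rightarrow> bool) set" where "EE = (\<lambda>(a, b, e). cw a b e) ` PP"

lemma cw_0: "cw a b e 0 = e"
  by (simp add: cw_def g0)

lemma cw_xor: "xorw (cw a b e) (cw a' b' e') = cw (a + a') (b + b') (e \<noteq> e')"
proof (rule ext)
  fix x
  have "a * g x + b * x + (a' * g x + b' * x) = (a + a') * g x + (b + b') * x"
    by (simp add: algebra_simps)
  hence "(tr m ((a + a') * g x + (b + b') * x) = 1) \<longleftrightarrow> ((tr m (a * g x + b * x) = 1) \<noteq> (tr m (a' * g x + b' * x) = 1))"
    by (metis tr_xor)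
  thus "xorw (cw a b e) (cw a' b' e') x = cw (a + a') (b + b') (e \<noteq> e') x"
    unfolding xorw_def cw_def by (cases e; cases e') auto
qed

lemma subg_EE: "subg UNIV EE"
  unfolding subg_def
proof (intro conjI ballI)
  show "EE \<subseteq> words UNIV" by (simp add: words_def)
  have "(\<lambda>_. False) = cw 0 0 False" by (simp add: cw_def fun_eq_iff)
  thus "(\<lambda>_. False) \<in> EE" using A0 unfolding EE_def PP_def by force
  fix e e' assume "e \<in> EE" "e' \<in> EE"
  then obtain a b \<epsilon> a' b' \<epsilon>' where "a \<in> A" "a' \<in> A" "e = cw a b \<epsilon>" "e' = cw a' b' \<epsilon>'"
    unfolding EE_def PP_def by auto
  thus "xorw e e' \<in> EE" unfolding EE_def PP_def using A_add by (force simp: cw_xor)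
qed

lemma code_gA_eq: "code_gA m g A = {cw a b False | a b. a \<in> A}"
proof -
  have "(\<lambda>x. x \<noteq> 0 \<and> tr m (a * g x + b * x) = 1) = cw a b False" for a b
    by (auto simp: cw_def fun_eq_iff g0)
  thus ?thesis unfolding code_gA_def by simp
qed

lemma card_split0: "card {i::'a. P i} = card {i \<in> UNIV - {0}. P i} + (if P 0 then 1 else 0)"
proof (cases "P 0")
  case True
  have "{i. P i} = insert 0 {i \<in> UNIV - {0}. P i}" using True by auto
  thus ?thesis using True by simp
next
  case False
  have "{i. P i} = {i \<in> UNIV - {0}. P i}" using False by auto
  thus ?thesis using False by simp
qed

lemma ext_eq: "extend_code (UNIV - {0}) 0 (dual_code (UNIV - {0}) (code_gA m g A)) = dual_code UNIV EE"
proof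
  show "extend_code (UNIV - {0}) 0 (dual_code (UNIV - {0}) (code_gA m g A)) \<subseteq> dual_code UNIV EE"
  proof
    fix w assume "w \<in> extend_code (UNIV - {0}) 0 (dual_code (UNIV - {0}) (code_gA m g A))"
    then obtain d where d: "d \<in> dual_code (UNIV - {0}) (code_gA m g A)"
      and w: "w = d(0 := odd (card {i \<in> UNIV - {0}. d i}))"
      unfolding extend_code_def by auto
    have d0: "\<not> d 0" using d by (auto simp: dual_code_def words_def)
    have dC: "even (card {i \<in> UNIV - {0}. cw a b False i \<and> d i})" if "a \<in> A" for a b
      using d that unfolding dual_code_def code_gA_eq by blast
    have wS: "even (card {i. w i})"
    proof -
      have "card {i. w i} = card {i \<in> UNIV - {0}. w i} + (if w 0 then 1 else 0)" by (rule card_split0)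
      moreover have "{i \<in> UNIV - {0}. w i} = {i \<in> UNIV - {0}. d i}" using w by auto
      ultimately show ?thesis using w by simp
    qed
    have wF: "even (card {i. cw a b False i \<and> w i})" if "a \<in> A" for a b
    proof -
      have "{i. cw a b False i \<and> w i} = {i \<in> UNIV - {0}. cw a b False i \<and> d i}"
        using w cw_0[of a b False] by auto
      thus ?thesis using dC[OF that] by simp
    qed
    show "w \<in> dual_code UNIV EE"
      unfolding dual_code_def
    proof (intro CollectI conjI ballI)
      show "w \<in> words UNIV" by (simp add: words_def)
      fix c assume "c \<in> EE"
      then obtain a b \<epsilon> where a: "a \<in> A" and c: "c = cw a b \<epsilon>" unfolding EE_def PP_def by auto
      show "even (card {i \<in> UNIV. c i \<and> w i})"
      proof (cases \<epsilon>)
        case False thus ?thesis using wF[OF a, of b] c by simp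
      next
        case True
        have "{i. c i \<and> w i} = {i. w i} - {i. cw a b False i \<and> w i}"
          using c True by (auto simp: cw_def)
        hence "card {i. c i \<and> w i} = card {i. w i} - card {i. cw a b False i \<and> w i}"
          by (simp add: card_Diff_subset subset_iff)
        moreover have "card {i. cw a b False i \<and> w i} \<le> card {i. w i}"
          by (rule card_mono) auto
        ultimately show ?thesis using wS wF[OF a, of b] by simp
      qed
    qed
  qed
next
  show "dual_code UNIV EE \<subseteq> extend_code (UNIV - {0}) 0 (dual_code (UNIV - {0}) (code_gA m g A))"
  proof
    fix w assume wd: "w \<in> dual_code UNIV EE"
    have wE: "even (card {i. c i \<and> w i})" if "c \<in> EE" for c
      using wd that unfolding dual_code_def by auto
    define d where "d = w(0 := False)"
    have dd: "d \<in> dual_code (UNIV - {0}) (code_gA m g A)"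
      unfolding dual_code_def
    proof (intro CollectI conjI ballI)
      show "d \<in> words (UNIV - {0})" by (simp add: words_def d_def)
      fix c assume "c \<in> code_gA m g A"
      then obtain a b where a: "a \<in> A" and c: "c = cw a b False" unfolding code_gA_eq by auto
      have "c \<in> EE" unfolding EE_def PP_def using a c by force
      moreover have "{i \<in> UNIV - {0}. c i \<and> d i} = {i. c i \<and> w i}"
        using c cw_0[of a b False] by (auto simp: d_def)
      ultimately show "even (card {i \<in> UNIV - {0}. c i \<and> d i})" using wE by simp
    qed
    have one: "cw 0 0 True \<in> EE" unfolding EE_def PP_def using A0 by force
    have "even (card {i. w i})" using wE[OF one] by (simp add: cw_def)
    moreover have "card {i. w i} = card {i \<in> UNIV - {0}. w i} + (if w 0 then 1 else 0)" by (rule card_split0)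
    moreover have "{i \<in> UNIV - {0}. d i} = {i \<in> UNIV - {0}. w i}" by (auto simp: d_def)
    ultimately have "w = d(0 := odd (card {i \<in> UNIV - {0}. d i}))"
      by (auto simp: d_def fun_eq_iff split: if_splits)
    thus "w \<in> extend_code (UNIV - {0}) 0 (dual_code (UNIV - {0}) (code_gA m g A))"
      unfolding extend_code_def using dd by blast
  qed
qed

lemma code_D_eq: "code_D m g A = EE"
  unfolding code_D_def ext_eq by (rule double_dual[OF finite subg_EE])

end

context gf begin

lemma LL_pos: "LL > 0" by (simp add: LL_def)

lemma Wsq_ab: "a \<noteq> 0 \<Longrightarrow> W a b ^ 2 = 0 \<or> W a b ^ 2 = 2 * 2 ^ m"
  using W_ab[of a b] LL_sq by (auto simp: power2_eq_square)

lemma even_fun: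
  assumes F: "F (- LL) = F LL" and a: "a \<noteq> 0"
  shows "2 * 2 ^ m * F (W a b) = 2 * 2 ^ m * F 0 + (F LL - F 0) * W a b ^ 2"
  using W_ab[OF a, of b] LL_sq F by (auto simp: power2_eq_square algebra_simps)

lemma odd_fun:
  assumes H: "H (- LL) = - H LL" "H 0 = 0" and a: "a \<noteq> 0"
  shows "LL * H (W a b) = H LL * W a b"
  using W_ab[OF a, of b] H by auto

lemma sum_even_tw:
  assumes F: "F (- LL) = F LL" and a: "a \<noteq> 0"
  shows "2 * (\<Sum>b\<in>UNIV. F (W a b) * chi (a * G + b * U)) =
    2 * F 0 * chi (a * G) * (if U = 0 then 2 ^ m else 0) + (F LL - F 0) * chi (a * G) * R a U"
proof -
  have "2 ^ m * (2 * (\<Sum>b\<in>UNIV. F (W a b) * chi (a * G + b * U))) =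
      (\<Sum>b\<in>UNIV. (2 * 2 ^ m * F (W a b)) * (chi (a * G) * chi (b * U)))"
    by (simp add: sum_distrib_left chi_add mult_ac)
  also have "\<dots> = (\<Sum>b\<in>UNIV. (2 * 2 ^ m * F 0 + (F LL - F 0) * W a b ^ 2) * (chi (a * G) * chi (b * U)))"
    by (simp only: even_fun[OF F a])
  also have "\<dots> = 2 * 2 ^ m * F 0 * chi (a * G) * (\<Sum>b\<in>UNIV. chi (b * U))
      + (F LL - F 0) * chi (a * G) * (\<Sum>b\<in>UNIV. W a b ^ 2 * chi (b * U))"
  proof -
    have "(2 * 2 ^ m * F 0 + (F LL - F 0) * W a b ^ 2) * (chi (a * G) * chi (b * U)) =
      2 * 2 ^ m * F 0 * chi (a * G) * chi (b * U) + (F LL - F 0) * chi (a * G) * (W a b ^ 2 * chi (b * U))" for b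
      by (simp add: ring_distribs mult_ac)
    thus ?thesis by (simp only: sum.distrib sum_distrib_left)
  qed
  also have "\<dots> = 2 ^ m * (2 * F 0 * chi (a * G) * (if U = 0 then 2 ^ m else 0) + (F LL - F 0) * chi (a * G) * R a U)"
    by (simp only: orth Wsq_tw) (simp add: algebra_simps)
  finally show ?thesis by simp
qed

lemma sum_odd_tw:
  assumes H: "H (- LL) = - H LL" "H 0 = 0" and a: "a \<noteq> 0"
  shows "LL * (\<Sum>b\<in>UNIV. H (W a b) * chi (a * G + b * U)) = H LL * 2 ^ m * chi (a * (G + g U))"
proof -
  have "LL * (\<Sum>b\<in>UNIV. H (W a b) * chi (a * G + b * U)) =
      (\<Sum>b\<in>UNIV. (LL * H (W a b)) * (chi (a * G) * chi (b * U)))"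
    by (simp add: sum_distrib_left chi_add mult_ac)
  also have "\<dots> = (\<Sum>b\<in>UNIV. (H LL * W a b) * (chi (a * G) * chi (b * U)))"
    by (simp only: odd_fun[OF H a])
  also have "\<dots> = H LL * chi (a * G) * (\<Sum>b\<in>UNIV. W a b * chi (b * U))"
    by (simp add: sum_distrib_left mult_ac)
  also have "\<dots> = H LL * 2 ^ m * chi (a * (G + g U))"
    by (simp add: W_inv chi_add distrib_left)
  finally show ?thesis .
qed

lemma sum_zero_a:
  "(\<Sum>b\<in>UNIV. F (W 0 b) * chi (0 * G + b * U)) = F (2 ^ m) + F 0 * ((if U = 0 then 2 ^ m else 0) - 1)"
proof -
  have "(\<Sum>b\<in>UNIV. F (W 0 b) * chi (0 * G + b * U)) = F (W 0 0) * chi 0 + (\<Sum>b\<in>UNIV - {0}. F (W 0 b) * chi (b * U))"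
    by (subst sum_split0) simp
  also have "(\<Sum>b\<in>UNIV - {0}. F (W 0 b) * chi (b * U)) = (\<Sum>b\<in>UNIV - {0}. F 0 * chi (b * U))"
    by (intro sum.cong refl) (simp add: W_0)
  also have "\<dots> = F 0 * ((\<Sum>b\<in>UNIV. chi (b * U)) - 1)"
    by (subst sum_split0[of "\<lambda>b. chi (b * U)"]) (simp add: sum_distrib_left)
  finally show ?thesis by (simp add: W_0 orth)
qed

lemma sum_chi_nz: "(\<Sum>a\<in>UNIV - {0}. chi (a * z)) = (if z = 0 then 2 ^ m - 1 else -1)"
proof -
  have "(\<Sum>a\<in>UNIV. chi (a * z)) = 1 + (\<Sum>a\<in>UNIV - {0}. chi (a * z))"
    by (subst sum_split0) simp
  thus ?thesis by (simp add: orth split: if_splits)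
qed

lemma D_sol: assumes xy: "x \<noteq> y" shows "{z. D (x + y) z = g x + g y} = {x, y}"
proof
  show "{z. D (x + y) z = g x + g y} \<subseteq> {x, y}"
  proof
    fix z assume "z \<in> {z. D (x + y) z = g x + g y}"
    hence "g z + g (z + (x + y)) = g x + g y" by (simp add: D_def)
    from apn2[OF xy this] show "z \<in> {x, y}" by simp
  qed
  show "{x, y} \<subseteq> {z. D (x + y) z = g x + g y}"
  proof -
    have "y + (x + y) = x" by (metis add.commute add_self2)
    hence "D (x + y) y = g x + g y" unfolding D_def by (simp only: add.commute)
    moreover have "D (x + y) x = g x + g y" unfolding D_def by (simp only: add_self2)
    ultimately show ?thesis by auto
  qed
qed

lemma chiR: assumes xy: "x \<noteq> y"
  shows "(\<Sum>a\<in>UNIV - {0}. chi (a * (g x + g y)) * R a (x + y)) = 2 ^ m"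
proof -
  have "(\<Sum>a\<in>UNIV. chi (a * (g x + g y)) * R a (x + y)) =
      (\<Sum>a\<in>UNIV. \<Sum>z\<in>UNIV. chi (a * (g x + g y + D (x + y) z)))"
    unfolding R_def sum_distrib_left by (simp add: chi_add distrib_left)
  also have "\<dots> = (\<Sum>z\<in>UNIV. \<Sum>a\<in>UNIV. chi (a * (g x + g y + D (x + y) z)))"
    by (rule sum.swap)
  also have "\<dots> = (\<Sum>z\<in>UNIV. 2 ^ m * of_bool (z \<in> {x, y}))"
  proof (rule sum.cong[OF refl])
    fix z :: 'a
    have "(g x + g y + D (x + y) z = 0) \<longleftrightarrow> D (x + y) z = g x + g y"
      by (metis add_eq0_iff)
    also have "\<dots> \<longleftrightarrow> z \<in> {z. D (x + y) z = g x + g y}" by (rule mem_Collect_eq[symmetric])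
    also have "\<dots> \<longleftrightarrow> z \<in> {x, y}" by (simp only: D_sol[OF xy])
    finally have "(g x + g y + D (x + y) z = 0) \<longleftrightarrow> z \<in> {x, y}" .
    thus "(\<Sum>a\<in>UNIV. chi (a * (g x + g y + D (x + y) z))) = 2 ^ m * of_bool (z \<in> {x, y})"
      by (simp add: orth)
  qed
  also have "\<dots> = 2 ^ m * 2"
  proof -
    have pw: "(of_bool ((z::'a) \<in> {x, y}) :: int) = of_bool (z = x) + of_bool (z = y)" for z
      using xy by auto
    have "(\<Sum>z\<in>UNIV. of_bool ((z::'a) \<in> {x, y}) :: int) = (\<Sum>z\<in>UNIV. of_bool (z = x)) + (\<Sum>z\<in>UNIV. of_bool (z = y))"
      by (simp only: pw sum.distrib)
    also have "\<dots> = 2" by simp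
    finally have "(\<Sum>z\<in>UNIV. of_bool ((z::'a) \<in> {x, y}) :: int) = 2" .
    thus ?thesis by (simp only: sum_distrib_left[symmetric])
  qed
  finally have "(\<Sum>a\<in>UNIV. chi (a * (g x + g y)) * R a (x + y)) = 2 ^ m * 2" .
  moreover have "(\<Sum>a\<in>UNIV. chi (a * (g x + g y)) * R a (x + y)) =
      R 0 (x + y) + (\<Sum>a\<in>UNIV - {0}. chi (a * (g x + g y)) * R a (x + y))"
    by (subst sum_split0) simp
  moreover have "R 0 (x + y) = 2 ^ m" using card_int by (simp add: R_def)
  ultimately show ?thesis by simp
qed

end

context gf begin

lemma cardA_int: "int (card (A - {0})) = 2 ^ r - 1"
  using cardA A0 by (simp add: card_Diff_singleton of_nat_diff)

lemma finA: "finite A" by simp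

lemma sumA_split: "(\<Sum>a\<in>A. f a) = f 0 + (\<Sum>a\<in>A - {0}. (f a :: int))"
  using A0 by (simp add: sum.remove)

lemma SA0:
  fixes F :: "int \<Rightarrow> int"
  assumes F: "F (- LL) = F LL"
  shows "2 * (\<Sum>a\<in>A. \<Sum>b\<in>UNIV. F (W a b)) =
    2 * (F (2 ^ m) + (2 ^ m - 1) * F 0) + (2 ^ r - 1) * (2 * 2 ^ m * F 0 + (F LL - F 0) * 2 ^ m)"
proof -
  have z: "(\<Sum>b\<in>UNIV. F (W 0 b)) = F (2 ^ m) + (2 ^ m - 1) * F 0"
    using sum_zero_a[of F 0 0] by (simp add: algebra_simps)
  have nz: "2 * (\<Sum>b\<in>UNIV. F (W a b)) = 2 * 2 ^ m * F 0 + (F LL - F 0) * 2 ^ m" if "a \<noteq> 0" for a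
    using sum_even_tw[OF F that, of 0 0] R_0 by simp
  have "2 * (\<Sum>a\<in>A - {0}. \<Sum>b\<in>UNIV. F (W a b)) = (\<Sum>a\<in>A - {0}. 2 * (\<Sum>b\<in>UNIV. F (W a b)))"
    by (simp add: sum_distrib_left)
  also have "\<dots> = (\<Sum>a\<in>A - {0}. 2 * 2 ^ m * F 0 + (F LL - F 0) * 2 ^ m)"
    by (intro sum.cong refl) (simp add: nz)
  also have "\<dots> = (2 ^ r - 1) * (2 * 2 ^ m * F 0 + (F LL - F 0) * 2 ^ m)"
    using cardA_int by simp
  finally show ?thesis by (subst sumA_split) (simp add: z algebra_simps)
qed

lemma SA1:
  fixes H :: "int \<Rightarrow> int"
  assumes H: "H (- LL) = - H LL" "H 0 = 0"
  shows "LL * (\<Sum>a\<in>A. \<Sum>b\<in>UNIV. H (W a b) * chi (a * g u + b * u)) =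
    LL * H (2 ^ m) + H LL * 2 ^ m * (2 ^ r - 1)"
proof -
  have z: "(\<Sum>b\<in>UNIV. H (W 0 b) * chi (0 * g u + b * u)) = H (2 ^ m)"
    using sum_zero_a[of H "g u" u] H by simp
  have nz: "LL * (\<Sum>b\<in>UNIV. H (W a b) * chi (a * g u + b * u)) = H LL * 2 ^ m" if "a \<noteq> 0" for a
    using sum_odd_tw[OF H that, of "g u" u] by simp
  have "LL * (\<Sum>a\<in>A - {0}. \<Sum>b\<in>UNIV. H (W a b) * chi (a * g u + b * u)) =
      (\<Sum>a\<in>A - {0}. LL * (\<Sum>b\<in>UNIV. H (W a b) * chi (a * g u + b * u)))"
    by (simp add: sum_distrib_left)
  also have "\<dots> = (\<Sum>a\<in>A - {0}. H LL * 2 ^ m)"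
    by (intro sum.cong refl) (simp add: nz)
  also have "\<dots> = H LL * 2 ^ m * (2 ^ r - 1)"
    using cardA_int by simp
  finally show ?thesis using z by (subst sumA_split) (simp add: algebra_simps)
qed

lemma SQ2:
  fixes F :: "int \<Rightarrow> int"
  assumes F: "F (- LL) = F LL" and AU: "A = UNIV" and xy: "x \<noteq> y"
  shows "2 * (\<Sum>a\<in>A. \<Sum>b\<in>UNIV. F (W a b) * chi (a * (g x + g y) + b * (x + y))) =
    2 * (F (2 ^ m) - F 0) + (F LL - F 0) * 2 ^ m"
proof -
  have U: "x + y \<noteq> 0" using xy by (simp add: add_eq0_iff)
  have z: "(\<Sum>b\<in>UNIV. F (W 0 b) * chi (0 * (g x + g y) + b * (x + y))) = F (2 ^ m) - F 0"
    using sum_zero_a[of F "g x + g y" "x + y"] U by simp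
  have nz: "2 * (\<Sum>b\<in>UNIV. F (W a b) * chi (a * (g x + g y) + b * (x + y))) =
      (F LL - F 0) * (chi (a * (g x + g y)) * R a (x + y))" if "a \<noteq> 0" for a
    using sum_even_tw[OF F that, of "g x + g y" "x + y"] U by simp
  have "2 * (\<Sum>a\<in>A - {0}. \<Sum>b\<in>UNIV. F (W a b) * chi (a * (g x + g y) + b * (x + y))) =
      (\<Sum>a\<in>A - {0}. 2 * (\<Sum>b\<in>UNIV. F (W a b) * chi (a * (g x + g y) + b * (x + y))))"
    by (simp add: sum_distrib_left)
  also have "\<dots> = (\<Sum>a\<in>UNIV - {0}. (F LL - F 0) * (chi (a * (g x + g y)) * R a (x + y)))"
    unfolding AU by (intro sum.cong refl) (simp add: nz)
  also have "\<dots> = (F LL - F 0) * 2 ^ m"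
    by (simp add: sum_distrib_left[symmetric] chiR[OF xy])
  finally show ?thesis using z by (subst sumA_split) (simp add: algebra_simps)
qed

lemma SH3:
  fixes H :: "int \<Rightarrow> int"
  assumes H: "H (- LL) = - H LL" "H 0 = 0" and AU: "A = UNIV"
    and d: "x \<noteq> y" "x \<noteq> w" "y \<noteq> w"
  shows "LL * (\<Sum>a\<in>A. \<Sum>b\<in>UNIV. H (W a b) * chi (a * (g x + g y + g w) + b * (x + y + w))) =
    LL * H (2 ^ m) - H LL * 2 ^ m"
proof -
  have z: "(\<Sum>b\<in>UNIV. H (W 0 b) * chi (0 * (g x + g y + g w) + b * (x + y + w))) = H (2 ^ m)"
    using sum_zero_a[of H "g x + g y + g w" "x + y + w"] H by simp
  have nz: "LL * (\<Sum>b\<in>UNIV. H (W a b) * chi (a * (g x + g y + g w) + b * (x + y + w))) =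
      H LL * 2 ^ m * chi (a * (g x + g y + g w + g (x + y + w)))" if "a \<noteq> 0" for a
    using sum_odd_tw[OF H that, of "g x + g y + g w" "x + y + w"] by simp
  have ne: "g x + g y + g w + g (x + y + w) \<noteq> 0"
    using apn3[OF d] by (simp add: add_eq0_iff)
  have "LL * (\<Sum>a\<in>A - {0}. \<Sum>b\<in>UNIV. H (W a b) * chi (a * (g x + g y + g w) + b * (x + y + w))) =
      (\<Sum>a\<in>A - {0}. LL * (\<Sum>b\<in>UNIV. H (W a b) * chi (a * (g x + g y + g w) + b * (x + y + w))))"
    by (simp add: sum_distrib_left)
  also have "\<dots> = (\<Sum>a\<in>UNIV - {0}. H LL * 2 ^ m * chi (a * (g x + g y + g w + g (x + y + w))))"
    unfolding AU by (intro sum.cong refl) (simp add: nz)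
  also have "\<dots> = - (H LL * 2 ^ m)"
    using ne by (simp add: sum_distrib_left[symmetric] sum_chi_nz)
  finally show ?thesis using z by (subst sumA_split) (simp add: algebra_simps)
qed

end

context gf begin

definition sg :: "bool \<Rightarrow> int" where "sg e = (if e then -1 else 1)"

definition qf :: "int \<Rightarrow> int \<Rightarrow> int" where
  "qf K w = of_bool (2 * K = 2 ^ m - w) + of_bool (2 * K = 2 ^ m + w)"

definition hf :: "int \<Rightarrow> int \<Rightarrow> int" where
  "hf K w = of_bool (2 * K = 2 ^ m - w) - of_bool (2 * K = 2 ^ m + w)"

lemma qf_even: "qf K (- w) = qf K w" by (simp add: qf_def)
lemma hf_odd: "hf K (- w) = - hf K w" by (simp add: hf_def)
lemma hf_0: "hf K 0 = 0" by (simp add: hf_def)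

definition cwp :: "'a \<times> 'a \<times> bool \<Rightarrow> 'a \<Rightarrow> bool" where
  "cwp p = (case p of (a, b, e) \<Rightarrow> cw a b e)"

lemma cwp_simp [simp]: "cwp (a, b, e) = cw a b e" by (simp add: cwp_def)

lemma EE_img: "EE = cwp ` PP"
  unfolding EE_def cwp_def by (simp add: case_prod_beta)

lemma chi_tr: "chi y = 1 - 2 * of_bool (tr m y = 1)"
  by (simp add: chi_eq)

lemma card_tr: "W a b = 2 ^ m - 2 * int (card {x. tr m (a * g x + b * x) = 1})"
proof -
  have "W a b = (\<Sum>x\<in>UNIV. 1 - 2 * of_bool (tr m (a * g x + b * x) = 1))"
    unfolding W_def by (simp only: chi_tr)
  also have "\<dots> = 2 ^ m - 2 * (\<Sum>x\<in>UNIV. of_bool (tr m (a * g x + b * x) = 1))"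
    by (simp add: sum_subtractf sum_distrib_left card_int)
  also have "(\<Sum>x\<in>UNIV. of_bool (tr m (a * g x + b * x) = 1) :: int) = int (card {x. tr m (a * g x + b * x) = 1})"
    by simp
  finally show ?thesis .
qed

lemma hw_cw: "2 * int (hweight (cw a b e)) = 2 ^ m - sg e * W a b"
proof (cases e)
  case False
  have "hweight (cw a b e) = card {x. tr m (a * g x + b * x) = 1}"
    using False by (simp add: hweight_def supp_def cw_def)
  thus ?thesis using False card_tr[of a b] by (simp add: sg_def)
next
  case True
  have "hweight (cw a b e) = card (UNIV - {x. tr m (a * g x + b * x) = 1})"
    using True by (simp add: hweight_def supp_def cw_def set_diff_eq)
  also have "\<dots> = card (UNIV::'a set) - card {x. tr m (a * g x + b * x) = 1}"
    by (rule card_Diff_subset) auto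
  moreover have "card {x. tr m (a * g x + b * x) = 1} \<le> card (UNIV::'a set)"
    by (rule card_mono) auto
  ultimately have "int (hweight (cw a b e)) = 2 ^ m - int (card {x. tr m (a * g x + b * x) = 1})"
    using card_field by (simp add: of_nat_diff)
  thus ?thesis using True card_tr[of a b] by (simp add: sg_def)
qed

lemma pt_cw: "2 * of_bool (cw a b e x) = 1 - sg e * chi (a * g x + b * x)"
  by (cases e) (auto simp: cw_def sg_def chi_eq)

lemma LL_lt: "LL < 2 ^ m"
proof -
  have "(m + 1) div 2 < m" using m_ge by simp
  thus ?thesis unfolding LL_def by (simp add: power_strict_increasing)
qed

lemma inj_cwp: "inj_on cwp PP"
proof (rule inj_onI)
  fix p p' assume "p \<in> PP" "p' \<in> PP" and eq: "cwp p = cwp p'"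
  obtain a b e where p: "p = (a, b, e)" by (cases p) auto
  obtain a' b' e' where p': "p' = (a', b', e')" by (cases p') auto
  have eq': "cw a b e = cw a' b' e'" using eq p p' by simp
  hence ee: "e = e'" using cw_0[of a b e] cw_0[of a' b' e'] by metis
  have c: "chi (a * g x + b * x) = chi (a' * g x + b' * x)" for x
  proof -
    have "cw a b e x = cw a' b' e' x" using eq' by simp
    hence "(tr m (a * g x + b * x) = 1) = (tr m (a' * g x + b' * x) = 1)" using ee unfolding cw_def by (cases e') simp_all
    thus ?thesis by (simp add: chi_eq)
  qed
  have one: "chi ((a + a') * g x + (b + b') * x) = 1" for x
  proof -
    have "(a + a') * g x + (b + b') * x = (a * g x + b * x) + (a' * g x + b' * x)" by (simp add: algebra_simps)
    hence "chi ((a + a') * g x + (b + b') * x) = chi (a * g x + b * x) * chi (a' * g x + b' * x)"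
      by (simp add: chi_add)
    thus ?thesis using c[of x] by simp
  qed
  have Wn: "W (a + a') (b + b') = 2 ^ m" unfolding W_def using one card_int by simp
  have aa: "a + a' = 0"
  proof (rule ccontr)
    assume "a + a' \<noteq> 0"
    from W_ab[OF this, of "b + b'"] Wn LL_lt LL_pos show False by auto
  qed
  hence "a = a'" by (simp add: add_eq0_iff)
  moreover have "b = b'"
    using Wn aa W_0[of "b + b'"] by (auto simp: add_eq0_iff split: if_splits)
  ultimately show "p = p'" using p p' ee by simp
qed

lemma inj_supp: "inj supp"
  by (rule injI) (simp add: supp_def fun_eq_iff set_eq_iff)

lemma wc_eq: "weight_count (code_D m g A) k = card {p \<in> PP. hweight (cwp p) = k}"
proof -
  have "{c \<in> code_D m g A. hweight c = k} = cwp ` {p \<in> PP. hweight (cwp p) = k}"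
    unfolding code_D_eq EE_img by auto
  moreover have "inj_on cwp {p \<in> PP. hweight (cwp p) = k}"
    by (rule inj_on_subset[OF inj_cwp]) auto
  ultimately show ?thesis unfolding weight_count_def by (simp add: card_image)
qed

lemma blk_eq: "card {bl \<in> supp ` {c \<in> code_D m g A. hweight c = k}. T \<subseteq> bl} =
    card {p \<in> PP. hweight (cwp p) = k \<and> (\<forall>x\<in>T. cwp p x)}"
proof -
  have "{bl \<in> supp ` {c \<in> code_D m g A. hweight c = k}. T \<subseteq> bl} =
      supp ` cwp ` {p \<in> PP. hweight (cwp p) = k \<and> (\<forall>x\<in>T. cwp p x)}"
    unfolding code_D_eq EE_img by (auto simp: supp_def)
  moreover have "inj_on cwp {p \<in> PP. hweight (cwp p) = k \<and> (\<forall>x\<in>T. cwp p x)}"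
    by (rule inj_on_subset[OF inj_cwp]) auto
  moreover have "inj_on supp (cwp ` {p \<in> PP. hweight (cwp p) = k \<and> (\<forall>x\<in>T. cwp p x)})"
    by (rule inj_on_subset[OF inj_supp]) simp
  ultimately show ?thesis by (simp add: card_image)
qed

lemma sum_PP: "(\<Sum>p\<in>PP. f p) = (\<Sum>a\<in>A. \<Sum>b\<in>UNIV. \<Sum>e\<in>UNIV. (f (a, b, e) :: int))"
  unfolding PP_def by (simp add: sum.cartesian_product)

lemma card_PP: "int (card {p \<in> PP. Q p}) = (\<Sum>a\<in>A. \<Sum>b\<in>UNIV. \<Sum>e\<in>UNIV. of_bool (Q (a, b, e)))"
proof -
  have "int (card {p \<in> PP. Q p}) = (\<Sum>p\<in>PP. of_bool (Q p))"
  proof -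
    have "finite PP" using finA unfolding PP_def by (intro finite_cartesian_product) auto
    hence "(\<Sum>p\<in>PP. of_bool (Q p) :: int) = of_nat (card (PP \<inter> {p. Q p}))" using sum_of_bool_eq by blast
    moreover have "PP \<inter> {p. Q p} = {p \<in> PP. Q p}" by blast
    ultimately show ?thesis by simp
  qed
  thus ?thesis by (simp only: sum_PP)
qed

lemma sum_bool: "(\<Sum>e\<in>UNIV. f e) = f True + (f False :: int)"
  by (simp add: UNIV_bool)

lemma hw_iff: "hweight (cw a b e) = k \<longleftrightarrow> 2 * int k = 2 ^ m - sg e * W a b"
  using hw_cw[of a b e] by auto

lemma C0: "int (card {p \<in> PP. hweight (cwp p) = k}) = (\<Sum>a\<in>A. \<Sum>b\<in>UNIV. qf (int k) (W a b))"
  unfolding card_PP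
  by (intro sum.cong refl) (simp add: sum_bool hw_iff qf_def sg_def add.commute)

lemma C1_pt: "(\<Sum>e\<in>UNIV. 2 * of_bool (hweight (cwp (a, b, e)) = k \<and> (\<forall>x\<in>{u}. cwp (a, b, e) x))) =
      qf (int k) (W a b) - hf (int k) (W a b) * chi (a * g u + b * u)"
proof -
  have pe: "(2::int) * of_bool (hweight (cwp (a, b, e)) = k \<and> (\<forall>x\<in>{u}. cwp (a, b, e) x)) =
      of_bool (2 * int k = 2 ^ m - sg e * W a b) * (1 - sg e * chi (a * g u + b * u))" for e
  proof -
    have "(2::int) * of_bool (hweight (cwp (a, b, e)) = k \<and> (\<forall>x\<in>{u}. cwp (a, b, e) x)) =
        of_bool (hweight (cw a b e) = k) * (2 * of_bool (cw a b e u))" by simp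
    thus ?thesis by (simp only: pt_cw hw_iff)
  qed
  show ?thesis unfolding pe sum_bool by (simp add: sg_def qf_def hf_def algebra_simps)
qed

lemma C1: "2 * int (card {p \<in> PP. hweight (cwp p) = k \<and> (\<forall>x\<in>{u}. cwp p x)}) =
    (\<Sum>a\<in>A. \<Sum>b\<in>UNIV. qf (int k) (W a b) - hf (int k) (W a b) * chi (a * g u + b * u))"
  unfolding card_PP sum_distrib_left by (simp only: C1_pt)

lemma C3_pt: "(\<Sum>e\<in>UNIV. 8 * of_bool (hweight (cwp (a, b, e)) = k \<and> (\<forall>x\<in>{u, v, w}. cwp (a, b, e) x))) =
    qf (int k) (W a b) * (1 + chi (a * g u + b * u) * chi (a * g v + b * v)
        + chi (a * g u + b * u) * chi (a * g w + b * w) + chi (a * g v + b * v) * chi (a * g w + b * w))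
      - hf (int k) (W a b) * (chi (a * g u + b * u) + chi (a * g v + b * v) + chi (a * g w + b * w)
        + chi (a * g u + b * u) * chi (a * g v + b * v) * chi (a * g w + b * w))"
proof -
  define cu where "cu = chi (a * g u + b * u)"
  define cv where "cv = chi (a * g v + b * v)"
  define cx where "cx = chi (a * g w + b * w)"
  have pe: "(8::int) * of_bool (hweight (cwp (a, b, e)) = k \<and> (\<forall>x\<in>{u, v, w}. cwp (a, b, e) x)) =
      of_bool (2 * int k = 2 ^ m - sg e * W a b) * ((1 - sg e * cu) * (1 - sg e * cv) * (1 - sg e * cx))" for e
  proof -
    have "(8::int) * of_bool (hweight (cwp (a, b, e)) = k \<and> (\<forall>x\<in>{u, v, w}. cwp (a, b, e) x)) =
      of_bool (hweight (cw a b e) = k) * ((2 * of_bool (cw a b e u)) * (2 * of_bool (cw a b e v)) * (2 * of_bool (cw a b e w)))"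
      by simp
    thus ?thesis by (simp only: pt_cw hw_iff cu_def cv_def cx_def)
  qed
  have "(\<Sum>e\<in>UNIV. 8 * of_bool (hweight (cwp (a, b, e)) = k \<and> (\<forall>x\<in>{u, v, w}. cwp (a, b, e) x))) =
    qf (int k) (W a b) * (1 + cu * cv + cu * cx + cv * cx) - hf (int k) (W a b) * (cu + cv + cx + cu * cv * cx)"
    unfolding pe sum_bool by (simp add: sg_def qf_def hf_def algebra_simps)
  thus ?thesis by (simp only: cu_def cv_def cx_def)
qed

lemma C3: "8 * int (card {p \<in> PP. hweight (cwp p) = k \<and> (\<forall>x\<in>{u, v, w}. cwp p x)}) =
    (\<Sum>a\<in>A. \<Sum>b\<in>UNIV. qf (int k) (W a b) * (1 + chi (a * g u + b * u) * chi (a * g v + b * v)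
        + chi (a * g u + b * u) * chi (a * g w + b * w) + chi (a * g v + b * v) * chi (a * g w + b * w))
      - hf (int k) (W a b) * (chi (a * g u + b * u) + chi (a * g v + b * v) + chi (a * g w + b * w)
        + chi (a * g u + b * u) * chi (a * g v + b * v) * chi (a * g w + b * w)))"
  unfolding card_PP sum_distrib_left by (simp only: C3_pt)

end

lemma dcount:
  assumes fU: "finite U" and Bs: "\<forall>b\<in>B. b \<subseteq> U \<and> card b = k"
    and cst: "\<forall>T. T \<subseteq> U \<and> card T = t \<longrightarrow> card {b\<in>B. T \<subseteq> b} = c"
  shows "c * (card U choose t) = card B * (k choose t)"
proof -
  define Ts where "Ts = {T. T \<subseteq> U \<and> card T = t}"
  have "B \<subseteq> Pow U" using Bs by auto
  hence fB: "finite B" using fU by (simp add: finite_subset)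
  have "Ts \<subseteq> Pow U" by (auto simp: Ts_def)
  hence fTs: "finite Ts" using fU by (simp add: finite_subset)
  have "(\<Sum>T\<in>Ts. card {b\<in>B. T \<subseteq> b}) = (\<Sum>T\<in>Ts. c)"
  proof (rule sum.cong[OF refl])
    fix T assume "T \<in> Ts"
    thus "card {b\<in>B. T \<subseteq> b} = c" using cst unfolding Ts_def by blast
  qed
  also have "\<dots> = c * (card U choose t)" using n_subsets[OF fU, of t] by (simp add: Ts_def)
  finally have 1: "(\<Sum>T\<in>Ts. card {b\<in>B. T \<subseteq> b}) = c * (card U choose t)" .
  have "(\<Sum>T\<in>Ts. card {b\<in>B. T \<subseteq> b}) = (\<Sum>T\<in>Ts. \<Sum>b\<in>B. of_bool (T \<subseteq> b))"
  proof (rule sum.cong[OF refl])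
    fix T
    have "(\<Sum>b\<in>B. of_bool (T \<subseteq> b) :: nat) = of_nat (card (B \<inter> {b. T \<subseteq> b}))"
      by (rule sum_of_bool_eq[OF fB fB])
    moreover have "B \<inter> {b. T \<subseteq> b} = {b\<in>B. T \<subseteq> b}" by blast
    ultimately show "card {b\<in>B. T \<subseteq> b} = (\<Sum>b\<in>B. of_bool (T \<subseteq> b))" by simp
  qed
  also have "\<dots> = (\<Sum>b\<in>B. \<Sum>T\<in>Ts. of_bool (T \<subseteq> b))" by (rule sum.swap)
  also have "\<dots> = (\<Sum>b\<in>B. k choose t)"
  proof (rule sum.cong[OF refl])
    fix b assume b: "b \<in> B"
    have "(\<Sum>T\<in>Ts. of_bool (T \<subseteq> b) :: nat) = of_nat (card (Ts \<inter> {T. T \<subseteq> b}))"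
      by (rule sum_of_bool_eq[OF fTs fTs])
    moreover have "Ts \<inter> {T. T \<subseteq> b} = {T. T \<subseteq> b \<and> card T = t}" using b Bs by (auto simp: Ts_def)
    moreover have "finite b" using b Bs fU finite_subset by blast
    ultimately show "(\<Sum>T\<in>Ts. of_bool (T \<subseteq> b)) = k choose t"
      using n_subsets[of b t] b Bs by simp
  qed
  also have "\<dots> = card B * (k choose t)" by simp
  finally show ?thesis using 1 by simp
qed

lemma c2_real: "2 * real (x choose Suc (Suc 0)) = real x * (real x - 1)"
proof (induction x)
  case 0 then show ?case by simp
next
  case (Suc x)
  have "Suc x choose Suc (Suc 0) = (x choose Suc 0) + (x choose Suc (Suc 0))" by (rule binomial_Suc_Suc)
  moreover have "x choose Suc 0 = x" by simp
  ultimately have "2 * real (Suc x choose Suc (Suc 0)) = 2 * real x + 2 * real (x choose Suc (Suc 0))" by simp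
  also have "\<dots> = 2 * real x + real x * (real x - 1)" using Suc by simp
  finally show ?case by (simp add: algebra_simps)
qed

lemma c3_real: "6 * real (x choose 3) = real x * (real x - 1) * (real x - 2)"
proof -
  have "6 * real (x choose Suc (Suc (Suc 0))) = real x * (real x - 1) * (real x - 2)"
  proof (induction x)
    case 0 then show ?case by simp
  next
    case (Suc x)
    have "Suc x choose Suc (Suc (Suc 0)) = (x choose Suc (Suc 0)) + (x choose Suc (Suc (Suc 0)))" by (rule binomial_Suc_Suc)
    hence "6 * real (Suc x choose Suc (Suc (Suc 0))) = 3 * (2 * real (x choose Suc (Suc 0))) + 6 * real (x choose Suc (Suc (Suc 0)))"
      by (simp only: of_nat_add distrib_left)
    also have "\<dots> = 3 * (real x * (real x - 1)) + real x * (real x - 1) * (real x - 2)" by (simp only: Suc c2_real)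
    finally show ?case by (simp add: algebra_simps)
  qed
  thus ?thesis by (simp add: numeral_3_eq_3)
qed

context gf begin

definition QS :: "int \<Rightarrow> 'a \<Rightarrow> 'a \<Rightarrow> int" where
  "QS K G U = (\<Sum>a\<in>A. \<Sum>b\<in>UNIV. qf K (W a b) * chi (a * G + b * U))"

definition HS :: "int \<Rightarrow> 'a \<Rightarrow> 'a \<Rightarrow> int" where
  "HS K G U = (\<Sum>a\<in>A. \<Sum>b\<in>UNIV. hf K (W a b) * chi (a * G + b * U))"

definition cnt :: "nat \<Rightarrow> 'a set \<Rightarrow> nat" where
  "cnt k T = card {p \<in> PP. hweight (cwp p) = k \<and> (\<forall>x\<in>T. cwp p x)}"

lemma QS00: "QS K 0 0 = (\<Sum>a\<in>A. \<Sum>b\<in>UNIV. qf K (W a b))"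
  by (simp add: QS_def)

lemma cnt1: "2 * LL * int (cnt k {u}) = LL * QS (int k) 0 0 - (LL * hf (int k) (2 ^ m) + hf (int k) LL * 2 ^ m * (2 ^ r - 1))"
proof -
  have e1: "2 * int (cnt k {u}) = QS (int k) 0 0 - HS (int k) (g u) u"
    unfolding cnt_def C1 QS00 HS_def by (simp add: sum_subtractf)
  have e2: "LL * HS (int k) (g u) u = LL * hf (int k) (2 ^ m) + hf (int k) LL * 2 ^ m * (2 ^ r - 1)"
    unfolding HS_def by (rule SA1) (simp_all add: hf_odd hf_0)
  have "2 * LL * int (cnt k {u}) = LL * (2 * int (cnt k {u}))" by simp
  also have "\<dots> = LL * QS (int k) 0 0 - LL * HS (int k) (g u) u" by (simp only: e1 right_diff_distrib)
  finally show ?thesis by (simp only: e2)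
qed

lemma chi2: "chi (a * g u + b * u) * chi (a * g v + b * v) = chi (a * (g u + g v) + b * (u + v))"
proof -
  have "a * g u + b * u + (a * g v + b * v) = a * (g u + g v) + b * (u + v)" by (simp add: algebra_simps)
  thus ?thesis by (simp only: chi_add[symmetric])
qed

lemma chi3: "chi (a * (g u + g v) + b * (u + v)) * chi (a * g w + b * w) =
    chi (a * (g u + g v + g w) + b * (u + v + w))"
proof -
  have "a * (g u + g v) + b * (u + v) + (a * g w + b * w) = a * (g u + g v + g w) + b * (u + v + w)"
    by (simp add: algebra_simps)
  thus ?thesis by (simp only: chi_add[symmetric])
qed

lemma cnt3: "8 * int (cnt k {u, v, w}) = QS (int k) 0 0 + QS (int k) (g u + g v) (u + v)
    + QS (int k) (g u + g w) (u + w) + QS (int k) (g v + g w) (v + w)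
    - HS (int k) (g u) u - HS (int k) (g v) v - HS (int k) (g w) w - HS (int k) (g u + g v + g w) (u + v + w)"
  unfolding cnt_def C3 QS00 QS_def HS_def chi2 chi3
  by (simp add: sum.distrib sum_subtractf ring_distribs)

lemma cnt3_const:
  assumes AU: "A = UNIV" and d: "u \<noteq> v" "u \<noteq> w" "v \<noteq> w"
  shows "16 * LL * int (cnt k {u, v, w}) = 2 * LL * QS (int k) 0 0
    + 3 * LL * (2 * (qf (int k) (2 ^ m) - qf (int k) 0) + (qf (int k) LL - qf (int k) 0) * 2 ^ m)
    - 6 * (LL * hf (int k) (2 ^ m) + hf (int k) LL * 2 ^ m * (2 ^ r - 1))
    - 2 * (LL * hf (int k) (2 ^ m) - hf (int k) LL * 2 ^ m)"
proof -
  have q: "2 * QS (int k) (g x + g y) (x + y) = 2 * (qf (int k) (2 ^ m) - qf (int k) 0) + (qf (int k) LL - qf (int k) 0) * 2 ^ m"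
    if "x \<noteq> y" for x y
    unfolding QS_def by (rule SQ2[where F="qf (int k)", OF qf_even AU that])
  have h: "LL * HS (int k) (g x) x = LL * hf (int k) (2 ^ m) + hf (int k) LL * 2 ^ m * (2 ^ r - 1)" for x
    unfolding HS_def by (rule SA1) (simp_all add: hf_odd hf_0)
  have h3: "LL * HS (int k) (g u + g v + g w) (u + v + w) = LL * hf (int k) (2 ^ m) - hf (int k) LL * 2 ^ m"
    unfolding HS_def by (rule SH3[OF _ _ AU d]) (simp_all add: hf_odd hf_0)
  have "16 * LL * int (cnt k {u, v, w}) = 2 * LL * (8 * int (cnt k {u, v, w}))" by simp
  also have "\<dots> = 2 * LL * QS (int k) 0 0 + LL * (2 * QS (int k) (g u + g v) (u + v))
    + LL * (2 * QS (int k) (g u + g w) (u + w)) + LL * (2 * QS (int k) (g v + g w) (v + w))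
    - 2 * (LL * HS (int k) (g u) u) - 2 * (LL * HS (int k) (g v) v) - 2 * (LL * HS (int k) (g w) w)
    - 2 * (LL * HS (int k) (g u + g v + g w) (u + v + w))"
    unfolding cnt3 by (simp add: algebra_simps)
  also have "\<dots> = 2 * LL * QS (int k) 0 0
    + 3 * LL * (2 * (qf (int k) (2 ^ m) - qf (int k) 0) + (qf (int k) LL - qf (int k) 0) * 2 ^ m)
    - 6 * (LL * hf (int k) (2 ^ m) + hf (int k) LL * 2 ^ m * (2 ^ r - 1))
    - 2 * (LL * hf (int k) (2 ^ m) - hf (int k) LL * 2 ^ m)"
    unfolding q[OF d(1)] q[OF d(2)] q[OF d(3)] h h3 by (simp add: algebra_simps)
  finally show ?thesis .
qed

end

context gf begin

lemma wc_formula: "2 * int (weight_count (code_D m g A) k) =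
  2 * (qf (int k) (2 ^ m) + (2 ^ m - 1) * qf (int k) 0) + (2 ^ r - 1) * (2 * 2 ^ m * qf (int k) 0 + (qf (int k) LL - qf (int k) 0) * 2 ^ m)"
  unfolding wc_eq C0 by (rule SA0[where F="qf (int k)", OF qf_even])

definition M1 :: int where "M1 = int (2 ^ (m - 1))"
definition H1 :: int where "H1 = int (2 ^ ((m - 1) div 2))"

lemma n_M1: "(2::int) ^ m = 2 * M1"
proof -
  have "m = Suc (m - 1)" using m_ge by simp
  hence "(2::int) ^ m = 2 ^ Suc (m - 1)" by (metis)
  thus ?thesis by (simp add: M1_def)
qed

lemma L_H1: "LL = 2 * H1"
proof -
  have "(m + 1) div 2 = Suc ((m - 1) div 2)" using m_ge m_odd by (auto elim!: oddE)
  thus ?thesis by (simp add: LL_def H1_def)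
qed

lemma H1_pos: "0 < H1" by (simp add: H1_def)

lemma H1_lt: "H1 < M1"
proof -
  have "(m - 1) div 2 < m - 1" using m_ge by simp
  hence "(2::nat) ^ ((m - 1) div 2) < 2 ^ (m - 1)" by (simp add: power_strict_increasing)
  thus ?thesis unfolding H1_def M1_def by linarith
qed

lemma R_ge: "(2::int) ^ r \<ge> 2"
proof -
  have "(2::int) ^ 1 \<le> 2 ^ r" using r_ge by (intro power_increasing) auto
  thus ?thesis by simp
qed

lemma wc_int: "int (weight_count (code_D m g A) k) =
  (if int k = 0 then 1
   else if int k = M1 - H1 then (2 ^ r - 1) * M1
   else if int k = M1 then 2 * 2 ^ r * M1 + 2 * M1 - 2
   else if int k = M1 + H1 then (2 ^ r - 1) * M1
   else if int k = 2 * M1 then 1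
   else 0)"
proof -
  define K where "K = int k"
  define R :: int where "R = 2 ^ r"
  have qn: "qf K (2 ^ m) = of_bool (K = 0) + of_bool (K = 2 * M1)"
    unfolding qf_def n_M1 by (simp add: algebra_simps)
  have q0: "qf K 0 = 2 * of_bool (K = M1)"
    unfolding qf_def n_M1 by auto
  have qL: "qf K LL = of_bool (K = M1 - H1) + of_bool (K = M1 + H1)"
    unfolding qf_def n_M1 L_H1 by auto
  have f: "2 * int (weight_count (code_D m g A) k) =
    2 * (qf K (2 * M1) + (2 * M1 - 1) * qf K 0) + (R - 1) * (2 * (2 * M1) * qf K 0 + (qf K LL - qf K 0) * (2 * M1))"
    using wc_formula[of k] unfolding K_def R_def n_M1 .
  have hp: "0 < H1" "H1 < M1" by (rule H1_pos, rule H1_lt)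
  have qn': "qf K (2 * M1) = of_bool (K = 0) + of_bool (K = 2 * M1)" using qn n_M1 by simp
  define X where "X = int (weight_count (code_D m g A) k)"
  have f2: "2 * X = 2 * ((of_bool (K = 0) + of_bool (K = 2 * M1)) + (2 * M1 - 1) * (2 * of_bool (K = M1)))
     + (R - 1) * (2 * (2 * M1) * (2 * of_bool (K = M1)) + ((of_bool (K = M1 - H1) + of_bool (K = M1 + H1)) - 2 * of_bool (K = M1)) * (2 * M1))"
    using f unfolding qn' q0 qL X_def .
  have "X = (if K = 0 then 1
   else if K = M1 - H1 then (R - 1) * M1
   else if K = M1 then 2 * R * M1 + 2 * M1 - 2
   else if K = M1 + H1 then (R - 1) * M1
   else if K = 2 * M1 then 1
   else 0)"
  proof (cases "K = 0")
    case True
    then show ?thesis using f2 hp by simp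
  next
    case c0: False
    show ?thesis
    proof (cases "K = M1 - H1")
      case True
      then show ?thesis using f2 hp c0 by (simp add: algebra_simps)
    next
      case c1: False
      show ?thesis
      proof (cases "K = M1")
        case True
        then show ?thesis using f2 hp c0 c1 by (simp add: algebra_simps)
      next
        case c2: False
        show ?thesis
        proof (cases "K = M1 + H1")
          case True
          then show ?thesis using f2 hp c0 c1 c2 by (simp add: algebra_simps)
        next
          case c3: False
          show ?thesis
          proof (cases "K = 2 * M1")
            case True
            then show ?thesis using f2 hp c0 c1 c2 c3 by (simp add: algebra_simps)
          next
            case c4: False
            then show ?thesis using f2 hp c0 c1 c2 c3 by (simp add: algebra_simps)
          qed
        qed
      qed
    qed
  qed
  thus ?thesis unfolding X_def K_def R_def .
qed

end

theorem theorem6: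
  fixes m r :: nat and g :: "'a::{field,finite} \<Rightarrow> 'a" and A :: "'a set"
  assumes card_field: "card (UNIV::'a set) = 2 ^ m"
    and m_ge: "m \<ge> 3" and m_odd: "odd m"
    and ab: "almost_bent m g" and g0: "g 0 = 0"
    and subgrp: "additive_subgroup A" and cardA: "card A = 2 ^ r"
    and r_ge: "1 \<le> r" and r_le: "r \<le> m"
  shows "(\<forall>k. weight_count (code_D m g A) k =
            (if k = 0 then 1
             else if k = 2 ^ (m - 1) - 2 ^ ((m - 1) div 2) then 2 ^ (m - 1) * (2 ^ r - 1)
             else if k = 2 ^ (m - 1) then 2 ^ (m + r) + 2 ^ m - 2
             else if k = 2 ^ (m - 1) + 2 ^ ((m - 1) div 2) then 2 ^ (m - 1) * (2 ^ r - 1)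
             else if k = 2 ^ m then 1
             else 0))
       \<and> (\<forall>k. weight_count (code_D m g A) k \<noteq> 0 \<longrightarrow>
            (let B = supp ` {c \<in> code_D m g A. hweight c = k};
                 Ak = real (weight_count (code_D m g A) k);
                 n = (2::real) ^ m
             in (r = m \<longrightarrow> t_design (UNIV::'a set) B 3 (2 ^ m) k
                    (real k * (real k - 1) * (real k - 2) * Ak / (n * (n - 1) * (n - 2))))
              \<and> (r \<noteq> m \<longrightarrow> t_design (UNIV::'a set) B 1 (2 ^ m) k (real k * Ak / n))))"
proof -
  interpret G: gf m g A r
    using card_field m_ge m_odd ab g0 subgrp cardA r_ge r_le by unfold_locales auto
  have m1: "m \<ge> 1" using m_ge by simp
  have hle: "(2::nat) ^ ((m - 1) div 2) \<le> 2 ^ (m - 1)" by (intro power_increasing) auto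
  have M1n: "G.M1 = int (2 ^ (m - 1))" by (simp add: G.M1_def)
  have H1n: "G.H1 = int (2 ^ ((m - 1) div 2))" by (simp add: G.H1_def)
  have nM: "int (2 ^ m) = 2 * G.M1" using G.n_M1 by simp
  have e1: "int (2 ^ (m - 1) - 2 ^ ((m - 1) div 2)) = G.M1 - G.H1"
    using hle unfolding M1n H1n by (simp add: of_nat_diff)
  have c1: "(k = 2 ^ (m - 1) - 2 ^ ((m - 1) div 2)) = (int k = G.M1 - G.H1)" for k
    unfolding e1[symmetric] by (rule of_nat_eq_iff[symmetric])
  have c2: "(k = 2 ^ (m - 1)) = (int k = G.M1)" for k
    unfolding M1n by (rule of_nat_eq_iff[symmetric])
  have e3: "int (2 ^ (m - 1) + 2 ^ ((m - 1) div 2)) = G.M1 + G.H1"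
    unfolding M1n H1n by simp
  have c3: "(k = 2 ^ (m - 1) + 2 ^ ((m - 1) div 2)) = (int k = G.M1 + G.H1)" for k
    unfolding e3[symmetric] by (rule of_nat_eq_iff[symmetric])
  have c4: "(k = 2 ^ m) = (int k = 2 * G.M1)" for k
    unfolding nM[symmetric] by (rule of_nat_eq_iff[symmetric])
  have c0: "(k = 0) = (int k = 0)" for k by simp
  have r1: "(1::nat) \<le> 2 ^ r" by simp
  have v1: "int (2 ^ (m - 1) * (2 ^ r - 1)) = (2 ^ r - 1) * G.M1"
    unfolding M1n using r1 by (simp add: of_nat_diff)
  have v2: "int (2 ^ (m + r) + 2 ^ m - 2) = 2 * 2 ^ r * G.M1 + 2 * G.M1 - 2"
  proof -
    have "(2::nat) ^ 1 \<le> 2 ^ m" by (rule power_increasing) (use m1 in auto)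
    hence "(2::nat) \<le> 2 ^ (m + r) + 2 ^ m" by simp
    hence "int (2 ^ (m + r) + 2 ^ m - 2) = int (2 ^ (m + r)) + int (2 ^ m) - 2" by (simp add: of_nat_diff)
    also have "int (2 ^ (m + r)) = int (2 ^ m) * 2 ^ r" by (simp add: power_add)
    finally show ?thesis unfolding nM by (simp add: algebra_simps)
  qed
  have part1: "\<forall>k. weight_count (code_D m g A) k =
            (if k = 0 then 1
             else if k = 2 ^ (m - 1) - 2 ^ ((m - 1) div 2) then 2 ^ (m - 1) * (2 ^ r - 1)
             else if k = 2 ^ (m - 1) then 2 ^ (m + r) + 2 ^ m - 2
             else if k = 2 ^ (m - 1) + 2 ^ ((m - 1) div 2) then 2 ^ (m - 1) * (2 ^ r - 1)
             else if k = 2 ^ m then 1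
             else 0)"
  proof
    fix k
    have "int (if k = 0 then 1
             else if k = 2 ^ (m - 1) - 2 ^ ((m - 1) div 2) then 2 ^ (m - 1) * (2 ^ r - 1)
             else if k = 2 ^ (m - 1) then 2 ^ (m + r) + 2 ^ m - 2
             else if k = 2 ^ (m - 1) + 2 ^ ((m - 1) div 2) then 2 ^ (m - 1) * (2 ^ r - 1)
             else if k = 2 ^ m then 1
             else 0) = int (weight_count (code_D m g A) k)"
      unfolding G.wc_int if_distrib[where f=int] c0 c1 c2 c3 c4 v1 v2 by simp
    thus "weight_count (code_D m g A) k = (if k = 0 then 1
             else if k = 2 ^ (m - 1) - 2 ^ ((m - 1) div 2) then 2 ^ (m - 1) * (2 ^ r - 1)
             else if k = 2 ^ (m - 1) then 2 ^ (m + r) + 2 ^ m - 2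
             else if k = 2 ^ (m - 1) + 2 ^ ((m - 1) div 2) then 2 ^ (m - 1) * (2 ^ r - 1)
             else if k = 2 ^ m then 1
             else 0)" by (simp only: of_nat_eq_iff)
  qed
  have part2: "(r = m \<longrightarrow> t_design (UNIV::'a set) B 3 (2 ^ m) k
                    (real k * (real k - 1) * (real k - 2) * Ak / (n * (n - 1) * (n - 2))))
              \<and> (r \<noteq> m \<longrightarrow> t_design (UNIV::'a set) B 1 (2 ^ m) k (real k * Ak / n))"
    if B: "B = supp ` {c \<in> code_D m g A. hweight c = k}" and Ak: "Ak = real (weight_count (code_D m g A) k)"
      and n: "n = (2::real) ^ m" for k B Ak n
  proof -
    have Bs: "\<forall>b\<in>B. b \<subseteq> UNIV \<and> card b = k" using B by (auto simp: hweight_def)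
    have cB: "card {bl \<in> B. T \<subseteq> bl} = G.cnt k T" for T
      unfolding B G.cnt_def by (rule G.blk_eq)
    have cardB: "card B = weight_count (code_D m g A) k"
      unfolding B weight_count_def by (rule card_image) (rule inj_on_subset[OF G.inj_supp], simp)
    have cU: "card (UNIV::'a set) = 2 ^ m" by (rule card_field)
    have n8: "(8::nat) \<le> 2 ^ m"
    proof -
      have "(2::nat) ^ 3 \<le> 2 ^ m" using m_ge by (intro power_increasing) auto
      thus ?thesis by simp
    qed
    have Lnz: "G.LL \<noteq> 0" using G.LL_pos by simp
    have des_basic: "finite (UNIV::'a set) \<and> card (UNIV::'a set) = 2 ^ m \<and> (\<forall>b\<in>B. b \<subseteq> UNIV \<and> card b = k)"
      using Bs cU by simp
    show ?thesis
    proof (intro conjI impI)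
      assume rm: "r = m"
      have AU: "A = UNIV"
        using card_subset_eq[OF finite subset_UNIV[of A]] cardA cU rm by simp
      obtain T0 :: "'a set" where T0: "T0 \<subseteq> UNIV" "card T0 = 3"
        using obtain_subset_with_card_n[of 3 "UNIV::'a set"] n8 cU by auto
      have cst3: "\<forall>T. T \<subseteq> UNIV \<and> card T = 3 \<longrightarrow> card {b\<in>B. T \<subseteq> b} = G.cnt k T0"
      proof (intro allI impI)
        fix T :: "'a set" assume T: "T \<subseteq> UNIV \<and> card T = 3"
        have "card T = 3" using T by simp
        then obtain u v w where T': "T = {u, v, w}" "u \<noteq> v" "v \<noteq> w" "u \<noteq> w" unfolding card_3_iff by blast
        have "card T0 = 3" using T0 by simp
        then obtain u0 v0 w0 where T0': "T0 = {u0, v0, w0}" "u0 \<noteq> v0" "v0 \<noteq> w0" "u0 \<noteq> w0" unfolding card_3_iff by blast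
        have "16 * G.LL * int (G.cnt k {u, v, w}) = 16 * G.LL * int (G.cnt k {u0, v0, w0})"
          unfolding G.cnt3_const[OF AU T'(2) T'(4) T'(3)] G.cnt3_const[OF AU T0'(2) T0'(4) T0'(3)] ..
        hence "G.cnt k T = G.cnt k T0" using Lnz T'(1) T0'(1) by simp
        thus "card {b\<in>B. T \<subseteq> b} = G.cnt k T0" using cB by simp
      qed
      have dc: "G.cnt k T0 * (card (UNIV::'a set) choose 3) = card B * (k choose 3)"
        by (rule dcount[OF finite Bs cst3])
      hence "real (G.cnt k T0 * (2 ^ m choose 3)) = real (card B * (k choose 3))" unfolding cU by simp
      hence h6: "real (G.cnt k T0) * real (2 ^ m choose 3) = real (card B) * real (k choose 3)"
        by (simp only: of_nat_mult)
      have "real (G.cnt k T0) * (6 * real (2 ^ m choose 3)) = real (card B) * (6 * real (k choose 3))"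
        using h6 by (metis mult.left_commute)
      hence eq: "real (G.cnt k T0) * (n * (n - 1) * (n - 2)) = Ak * (real k * (real k - 1) * (real k - 2))"
        unfolding c3_real cardB Ak n by simp
      have npos: "n * (n - 1) * (n - 2) \<noteq> 0"
      proof -
        have "real (8::nat) \<le> real ((2::nat) ^ m)" using n8 by (simp only: of_nat_le_iff)
        hence "(8::real) \<le> n" unfolding n by simp
        thus ?thesis by simp
      qed
      have val: "real (G.cnt k T0) = real k * (real k - 1) * (real k - 2) * Ak / (n * (n - 1) * (n - 2))"
        using eq npos by (simp add: field_simps)
      show "t_design (UNIV::'a set) B 3 (2 ^ m) k (real k * (real k - 1) * (real k - 2) * Ak / (n * (n - 1) * (n - 2)))"
        unfolding t_design_def using des_basic cst3 val by simp
    next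
      assume "r \<noteq> m"
      define u0 :: 'a where "u0 = 0"
      have cst1: "\<forall>T. T \<subseteq> UNIV \<and> card T = 1 \<longrightarrow> card {b\<in>B. T \<subseteq> b} = G.cnt k {u0}"
      proof (intro allI impI)
        fix T :: "'a set" assume T: "T \<subseteq> UNIV \<and> card T = 1"
        then obtain u where Tu: "T = {u}" using card_1_singletonE by blast
        have "2 * G.LL * int (G.cnt k {u}) = 2 * G.LL * int (G.cnt k {u0})"
          unfolding G.cnt1 ..
        hence "G.cnt k T = G.cnt k {u0}" using Lnz Tu by simp
        thus "card {b\<in>B. T \<subseteq> b} = G.cnt k {u0}" using cB by simp
      qed
      have dc: "G.cnt k {u0} * (card (UNIV::'a set) choose 1) = card B * (k choose 1)"
        by (rule dcount[OF finite Bs cst1])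
      hence "G.cnt k {u0} * 2 ^ m = weight_count (code_D m g A) k * k" unfolding cU cardB by simp
      hence "real (G.cnt k {u0} * 2 ^ m) = real (weight_count (code_D m g A) k * k)" by (simp only:)
      hence "real (G.cnt k {u0}) * n = Ak * real k" unfolding Ak n by simp
      hence val: "real (G.cnt k {u0}) = real k * Ak / n" unfolding n by (simp add: field_simps)
      show "t_design (UNIV::'a set) B 1 (2 ^ m) k (real k * Ak / n)"
        unfolding t_design_def using des_basic cst1 val by simp
    qed
  qed
  show ?thesis
    using part1 part2 by (simp add: Let_def)
qed

end
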